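(* Let $L\in\mathbb{N}$ and $0<\alpha_M<\alpha_Q$. For $\ell=1,\dots,L$ let $M_\ell,Q_\ell$ be independent random variables with PDFs $$f_{M_\ell}(m)=\frac{\alpha_M\mu_{M,\ell}^{\mu_{M,\ell}}m^{\alpha_M\mu_{M,\ell}-1}}{\Omega_{M,\ell}^{\alpha_M\mu_{M,\ell}}\Gamma(\mu_{M,\ell})}\exp\Big(-\mu_{M,\ell}\frac{m^{\alpha_M}}{\Omega_{M,\ell}^{\alpha_M}}\Big),\quad f_{Q_\ell}(q)=\frac{\alpha_Q\mu_{Q,\ell}^{\mu_{Q,\ell}}q^{\alpha_Q\mu_{Q,\ell}-1}}{\Omega_{Q,\ell}^{\alpha_Q\mu_{Q,\ell}}\Gamma(\mu_{Q,\ell})}\exp\Big(-\mu_{Q,\ell}\frac{q^{\alpha_Q}}{\Omega_{Q,\ell}^{\alpha_Q}}\Big)$$ on $(0,\infty)$, where $\mu_{a,\ell},\Omega_{a,\ell}>0$, and let $Z_\ell=M_\ell/Q_\ell$, with $Z_1,\dots,Z_L$ independent. Let $Z=\sum_{\ell=1}^LZ_\ell$, $\tilde\varrho_\ell=\frac{\Omega_{Q,\ell}\mu_{M,\ell}^{1/\alpha_M}}{\Omega_{M,\ell}\mu_{Q,\ell}^{1/\alpha_Q}}$, and for $i\ge0$ $$u_{i,\ell}=\frac{(-1)^i\,\Gamma(\alpha_M(i+\mu_{M,\ell}))}{i!\,\tilde\varrho_\ell^{-\alpha_M(\mu_{M,\ell}+i)}}\,\Gamma\Big(\frac{\alpha_M(i+\mu_{M,\ell})}{\alpha_Q}+\mu_{Q,\ell}\Big).$$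 Define $\phi_{0,\ell}=u_{1,\ell}/u_{0,\ell}$, $\phi_{h,\ell}=\frac{1}{u_{0,\ell}}\big[(h+1)u_{h+1,\ell}-\sum_{t=1}^hu_{t,\ell}\phi_{h-t,\ell}\big]$ for $h\ge1$, $\delta_0=\prod_{\ell=1}^Lu_{0,\ell}$ and $\delta_i=\frac1i\sum_{h=1}^i\delta_{i-h}\sum_{\ell=1}^L\phi_{h-1,\ell}$ for $i\ge1$. Then, with $B=\alpha_M\sum_{\ell=1}^L\mu_{M,\ell}$ and $C=\alpha_M^L\prod_{\ell=1}^L\frac{1}{\Gamma(\mu_{M,\ell})\Gamma(\mu_{Q,\ell})}$, $$f_Z(z)=C\sum_{i=0}^\infty\frac{\delta_i\,z^{-1+i\alpha_M+B}}{\Gamma(i\alpha_M+B)},\qquad F_Z(z)=C\sum_{i=0}^\infty\frac{\delta_i\,z^{i\alpha_M+B}}{\Gamma(1+i\alpha_M+B)},\qquad z\ge0.$$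
   Context: $\Gamma$ is the gamma function. $M_\ell$ and $Q_\ell$ are $\alpha$-$\mu$ distributed; the pairs need not be identically distributed across $\ell$. *)

theory Defs
  imports "HOL-Probability.Probability"
begin

definition alpha_mu_pdf :: "real \<Rightarrow> real \<Rightarrow> real \<Rightarrow> real \<Rightarrow> real" where
  "alpha_mu_pdf a mu Om x =
     (if 0 < x then
        a * mu powr mu * x powr (a * mu - 1) / (Om powr (a * mu) * Gamma mu)
          * exp (- mu * x powr a / Om powr a)
      else 0)"

definition rho_tilde :: "real \<Rightarrow> real \<Rightarrow> real \<Rightarrow> real \<Rightarrow> real \<Rightarrow> real \<Rightarrow> real" where
  "rho_tilde aM aQ muM muQ OmM OmQ =
     OmQ * muM powr (1 / aM) / (OmM * muQ powr (1 / aQ))"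

definition u_coef :: "real \<Rightarrow> real \<Rightarrow> real \<Rightarrow> real \<Rightarrow> real \<Rightarrow> real \<Rightarrow> nat \<Rightarrow> real" where
  "u_coef aM aQ muM muQ OmM OmQ i =
     (-1) ^ i * Gamma (aM * (real i + muM))
       / (fact i * rho_tilde aM aQ muM muQ OmM OmQ powr (- aM * (muM + real i)))
       * Gamma (aM * (real i + muM) / aQ + muQ)"

fun phi_coef :: "(nat \<Rightarrow> real) \<Rightarrow> nat \<Rightarrow> real" where
  "phi_coef u 0 = u 1 / u 0"
| "phi_coef u (Suc h) =
     (1 / u 0) * (real (Suc h + 1) * u (Suc h + 1)
        - (\<Sum>t = 1..Suc h. u t * phi_coef u (Suc h - t)))"

fun delta_coef :: "nat \<Rightarrow> (nat \<Rightarrow> real) \<Rightarrow> (nat \<Rightarrow> nat \<Rightarrow> real) \<Rightarrow> nat \<Rightarrow> real" where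
  "delta_coef L u0 phi 0 = (\<Prod>l = 1..L. u0 l)"
| "delta_coef L u0 phi (Suc i) =
     (1 / real (Suc i)) * (\<Sum>h = 1..Suc i. delta_coef L u0 phi (Suc i - h) * (\<Sum>l = 1..L. phi l (h - 1)))"

end

theory Submission
  imports Defs "HOL-Computational_Algebra.Formal_Power_Series"
begin
unbundle no vec_syntax
unbundle fps_syntax

lemma phi_fps:
  fixes u :: "nat \<Rightarrow> real"
  assumes "u 0 \<noteq> 0"
  shows "fps_deriv (Abs_fps u) = Abs_fps u * Abs_fps (phi_coef u)"
proof (rule fps_ext)
  fix n
  show "fps_deriv (Abs_fps u) $ n = (Abs_fps u * Abs_fps (phi_coef u)) $ n"
  proof (cases n)
    case 0
    then show ?thesis using assms by (simp add: fps_mult_nth)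
  next
    case (Suc h)
    have "(Abs_fps u * Abs_fps (phi_coef u)) $ n = (\<Sum>i=0..n. u i * phi_coef u (n - i))"
      by (simp add: fps_mult_nth)
    also have "\<dots> = u 0 * phi_coef u n + (\<Sum>i=1..n. u i * phi_coef u (n - i))"
      by (simp add: sum.atLeast_Suc_atMost)
    also have "u 0 * phi_coef u n = real (Suc h + 1) * u (Suc h + 1)
        - (\<Sum>t = 1..Suc h. u t * phi_coef u (Suc h - t))"
      using assms Suc by simp
    finally show ?thesis using Suc by simp
  qed
qed

lemma fps_deriv_prod_log:
  fixes U P :: "nat \<Rightarrow> real fps"
  assumes "finite A" "\<And>l. l \<in> A \<Longrightarrow> fps_deriv (U l) = U l * P l"
  shows "fps_deriv (\<Prod>l\<in>A. U l) = (\<Prod>l\<in>A. U l) * (\<Sum>l\<in>A. P l)"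
  using assms
proof (induction A rule: finite_induct)
  case empty
  then show ?case by simp
next
  case (insert a F)
  then show ?case by (simp add: algebra_simps)
qed

lemma prod_fps_nth0:
  fixes U :: "nat \<Rightarrow> real fps"
  shows "finite A \<Longrightarrow> (\<Prod>l\<in>A. U l) $ 0 = (\<Prod>l\<in>A. U l $ 0)"
  by (induction A rule: finite_induct) auto

lemma delta_eq_fps:
  fixes u :: "nat \<Rightarrow> nat \<Rightarrow> real"
  assumes "\<And>l. l \<in> {1..L} \<Longrightarrow> u l 0 \<noteq> 0"
  shows "delta_coef L (\<lambda>l. u l 0) (\<lambda>l h. phi_coef (u l) h) n
       = (\<Prod>l\<in>{1..L}. Abs_fps (u l)) $ n"
proof (induction n rule: less_induct)
  case (less n)
  define D where "D = (\<Prod>l\<in>{1..L}. Abs_fps (u l))"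
  define S where "S = (\<Sum>l\<in>{1..L}. Abs_fps (phi_coef (u l)))"
  have dD: "fps_deriv D = D * S"
    unfolding D_def S_def by (rule fps_deriv_prod_log) (simp_all add: phi_fps assms)
  show ?case
  proof (cases n)
    case 0
    then show ?thesis by (simp add: prod_fps_nth0)
  next
    case (Suc m)
    have "(\<Sum>h = 1..Suc m. delta_coef L (\<lambda>l. u l 0) (\<lambda>l h. phi_coef (u l) h) (Suc m - h)
            * (\<Sum>l = 1..L. phi_coef (u l) (h - 1)))
        = (\<Sum>h = 1..Suc m. D $ (Suc m - h) * S $ (h - 1))"
      using less Suc by (intro sum.cong) (auto simp: D_def S_def fps_sum_nth)
    also have "\<dots> = (\<Sum>i = 0..m. S $ i * D $ (m - i))"
      unfolding One_nat_def sum.atLeast_Suc_atMost_Suc_shift by (simp add: mult.commute)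
    also have "\<dots> = (S * D) $ m" by (simp add: fps_mult_nth)
    also have "\<dots> = fps_deriv D $ m" by (simp add: dD mult.commute)
    also have "\<dots> = real (Suc m) * D $ Suc m" by simp
    finally have "(\<Sum>h = 1..Suc m. delta_coef L (\<lambda>l. u l 0) (\<lambda>l h. phi_coef (u l) h) (Suc m - h)
            * (\<Sum>l = 1..L. phi_coef (u l) (h - 1))) = real (Suc m) * D $ Suc m" .
    then show ?thesis using Suc by (simp add: D_def)
  qed
qed

lemma beta_nn:
  fixes x w z :: real
  assumes "0<x" "0<w" "0<z"
  shows "(\<integral>\<^sup>+y. ennreal (indicator {0<..<z} y * ((z - y) powr (x-1) * y powr (w-1))) \<partial>lborel)
        = ennreal (z powr (x+w-1) * Beta x w)"
proof -
  have "(\<integral>\<^sup>+y. ennreal (indicator {0<..<z} y * ((z - y) powr (x-1) * y powr (w-1))) \<partial>lborel)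
      = \<bar>z\<bar> * (\<integral>\<^sup>+t. ennreal (indicator {0<..<z} (0 + z*t) * ((z - (0 + z*t)) powr (x-1) * (0 + z*t) powr (w-1))) \<partial>lborel)"
    using assms by (intro nn_integral_real_affine) auto
  also have "(\<lambda>t. ennreal (indicator {0<..<z} (0 + z*t) * ((z - (0 + z*t)) powr (x-1) * (0 + z*t) powr (w-1))))
     = (\<lambda>t. ennreal (z powr (x+w-2)) * ennreal (indicator {0<..<1} t * (t powr (w-1) * (1-t) powr (x-1))))"
  proof
    fix t
    show "ennreal (indicator {0<..<z} (0 + z*t) * ((z - (0 + z*t)) powr (x-1) * (0 + z*t) powr (w-1)))
      = ennreal (z powr (x+w-2)) * ennreal (indicator {0<..<1} t * (t powr (w-1) * (1-t) powr (x-1)))"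
    proof (cases "0 < t \<and> t < 1")
      case True
      have e1: "z - z*t = z * (1-t)" by (simp add: algebra_simps)
      have "(z - (0 + z*t)) powr (x-1) * (0 + z*t) powr (w-1)
          = z powr (x+w-2) * (t powr (w-1) * (1-t) powr (x-1))"
      proof -
        have "(z - (0 + z*t)) powr (x-1) * (0 + z*t) powr (w-1) = (z*(1-t)) powr (x-1) * (z*t) powr (w-1)"
          by (simp add: e1)
        also have "\<dots> = (z powr (x-1) * z powr (w-1)) * (t powr (w-1) * (1-t) powr (x-1))"
          using True assms by (simp add: powr_mult)
        also have "z powr (x-1) * z powr (w-1) = z powr (x+w-2)"
          by (simp add: powr_add[symmetric])
        finally show ?thesis .
      qed
      moreover have "z*t \<in> {0<..<z}" using True assms by auto
      ultimately show ?thesis using True assms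
        by (simp add: ennreal_mult'[symmetric] indicator_def)
    next
      case False
      then have "z*t \<notin> {0<..<z}" using assms
        by (auto simp: mult_less_cancel_left2 zero_less_mult_iff)
      moreover have "t \<notin> {0<..<1}" using False by auto
      ultimately show ?thesis by simp
    qed
  qed
  also have "(\<integral>\<^sup>+t. ennreal (z powr (x+w-2)) * ennreal (indicator {0<..<1} t * (t powr (w-1) * (1-t) powr (x-1))) \<partial>lborel)
     = ennreal (z powr (x+w-2)) * (\<integral>\<^sup>+t. ennreal (indicator {0<..<1} t * (t powr (w-1) * (1-t) powr (x-1))) \<partial>lborel)"
    by (intro nn_integral_cmult) auto
  also have "(\<integral>\<^sup>+t. ennreal (indicator {0<..<1} t * (t powr (w-1) * (1-t) powr (x-1))) \<partial>lborel) = ennreal (Beta w x)"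
  proof (rule nn_integral_has_integral_lebesgue)
    show "((\<lambda>t. t powr (w-1) * (1-t) powr (x-1)) has_integral Beta w x) {0<..<1}"
      using has_integral_Beta_real[of w x] assms by (simp add: has_integral_Icc_iff_Ioo)
  qed auto
  finally have eq: "(\<integral>\<^sup>+y. ennreal (indicator {0<..<z} y * ((z - y) powr (x-1) * y powr (w-1))) \<partial>lborel)
     = ennreal \<bar>z\<bar> * (ennreal (z powr (x + w - 2)) * ennreal (Beta w x))" .
  have "z * z powr (x+w-2) = z powr (x+w-1)"
    using assms powr_add[of z 1 "x+w-2"] by simp
  then show ?thesis using assms eq
    by (simp add: ennreal_mult'[symmetric] Beta_commute mult.assoc[symmetric])
qed

lemma beta_bochner:
  fixes x w z :: real
  assumes "0<x" "0<w" "0<z"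
  shows "has_bochner_integral lborel (\<lambda>y. indicator {0<..<z} y * ((z - y) powr (x-1) * y powr (w-1)))
        (z powr (x+w-1) * Beta x w)"
proof (rule has_bochner_integral_nn_integral)
  show "(\<lambda>y. indicator {0<..<z} y * ((z - y) powr (x-1) * y powr (w-1))) \<in> borel_measurable lborel"
    by measurable
  show "AE y in lborel. 0 \<le> indicator {0<..<z} y * ((z - y) powr (x-1) * y powr (w-1))"
    by (auto simp: indicator_def)
  show "0 \<le> z powr (x+w-1) * Beta x w"
    using assms by (auto simp: Beta_def intro!: mult_nonneg_nonneg divide_nonneg_nonneg Gamma_real_pos less_imp_le)
  show "(\<integral>\<^sup>+y. ennreal (indicator {0<..<z} y * ((z - y) powr (x-1) * y powr (w-1))) \<partial>lborel)
        = ennreal (z powr (x+w-1) * Beta x w)"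
    by (rule beta_nn[OF assms])
qed

lemma gpos: "0 < be \<Longrightarrow> 0 \<le> al \<Longrightarrow> 0 < Gamma (real i * al + be)"
  by (intro Gamma_real_pos add_nonneg_pos) auto

lemma gpos': "0 < be \<Longrightarrow> 0 \<le> al \<Longrightarrow> 0 \<le> Gamma (real i * al + be)"
  using gpos less_imp_le by blast

definition sd :: "real \<Rightarrow> (nat \<Rightarrow> real) \<Rightarrow> real \<Rightarrow> real \<Rightarrow> real" where
  "sd al a be z = (\<Sum>i. a i * z powr (real i * al + be - 1) / Gamma (real i * al + be))"

definition good :: "real \<Rightarrow> (nat \<Rightarrow> real) \<Rightarrow> real \<Rightarrow> bool" where
  "good al a be \<longleftrightarrow> (\<forall>z>0. summable (\<lambda>i. \<bar>a i\<bar> * z powr (real i * al + be - 1) / Gamma (real i * al + be)))"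

definition cp :: "(nat \<Rightarrow> real) \<Rightarrow> (nat \<Rightarrow> real) \<Rightarrow> nat \<Rightarrow> real" where
  "cp a b n = (\<Sum>i=0..n. a i * b (n - i))"

lemma gam_split:
  fixes x w z :: real
  assumes "0<x" "0<w" "0<z"
  shows "z powr (x+w-1) / Gamma (x+w) = (z powr (x-1) / Gamma x) * (z powr (w-1) / Gamma w) * z * Beta x w"
proof -
  have gx: "Gamma x > 0" "Gamma w > 0" "Gamma (x+w) > 0" using assms by (auto intro!: Gamma_real_pos)
  have "z powr (x+w-1) = z powr ((x-1)+(w-1)+1)"
    by (rule arg_cong[where f="(powr) z"]) simp
  also have "\<dots> = z powr (x-1) * z powr (w-1) * z powr 1" by (simp only: powr_add)
  finally have "z powr (x-1) * z powr (w-1) * z = z powr (x+w-1)" using assms by simp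
  then show ?thesis using gx unfolding Beta_def by (simp add: field_simps)
qed

lemma good_abs: "good al (\<lambda>i. \<bar>a i\<bar>) be = good al a be"
  by (simp add: good_def)

lemma good_cp:
  assumes "0 < al" "0 < be" "0 < ga" "good al a be" "good al b ga"
  shows "good al (cp a b) (be + ga)"
  unfolding good_def
proof (intro allI impI)
  fix z :: real assume z: "0 < z"
  define A where "A = (\<lambda>i. \<bar>a i\<bar> * z powr (real i * al + be - 1) / Gamma (real i * al + be))"
  define B where "B = (\<lambda>j. \<bar>b j\<bar> * z powr (real j * al + ga - 1) / Gamma (real j * al + ga))"
  have sA: "summable A" using assms(4) z by (simp add: good_def A_def)
  have sB: "summable B" using assms(5) z by (simp add: good_def B_def)
  have A0: "A i \<ge> 0" for i using assms by (auto simp: A_def gpos')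
  have B0: "B i \<ge> 0" for i using assms by (auto simp: B_def gpos')
  have "summable (\<lambda>k. \<Sum>i\<le>k. A i * B (k - i))"
    by (rule summable_Cauchy_product) (use sA sB A0 B0 in auto)
  then have S: "summable (\<lambda>k. z * Beta be ga * (\<Sum>i\<le>k. A i * B (k - i)))"
    by (rule summable_mult)
  show "summable (\<lambda>n. \<bar>cp a b n\<bar> * z powr (real n * al + (be + ga) - 1) / Gamma (real n * al + (be + ga)))"
  proof (rule summable_comparison_test'[OF S])
    fix n :: nat
    have "norm (\<bar>cp a b n\<bar> * z powr (real n * al + (be + ga) - 1) / Gamma (real n * al + (be + ga)))
        = \<bar>cp a b n\<bar> * (z powr (real n * al + (be + ga) - 1) / Gamma (real n * al + (be + ga)))"
      using assms gpos'[of "be+ga" al n] by (simp add: abs_mult)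
    also have "\<dots> \<le> (\<Sum>i\<le>n. \<bar>a i\<bar> * \<bar>b (n - i)\<bar>) * (z powr (real n * al + (be + ga) - 1) / Gamma (real n * al + (be + ga)))"
      unfolding cp_def atLeast0AtMost
      by (intro mult_right_mono order.trans[OF sum_abs] sum_mono) (use z assms gpos'[of "be+ga" al n] in \<open>auto simp: abs_mult\<close>)
    also have "\<dots> = (\<Sum>i\<le>n. \<bar>a i\<bar> * \<bar>b (n - i)\<bar> * (z powr (real n * al + (be + ga) - 1) / Gamma (real n * al + (be + ga))))"
      by (rule sum_distrib_right)
    also have "\<dots> \<le> (\<Sum>i\<le>n. z * Beta be ga * (A i * B (n - i)))"
    proof (intro sum_mono)
      fix i assume i: "i \<in> {..n}"
      define x where "x = real i * al + be"
      define w where "w = real (n - i) * al + ga"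
      have x0: "0 < x" "be \<le> x" using assms by (auto simp: x_def intro!: add_nonneg_pos)
      have w0: "0 < w" "ga \<le> w" using assms by (auto simp: w_def intro!: add_nonneg_pos)
      have xw: "real n * al + (be + ga) = x + w"
        using i by (simp add: x_def w_def of_nat_diff algebra_simps)
      have "z powr (x+w-1) / Gamma (x+w) = (z powr (x-1) / Gamma x) * (z powr (w-1) / Gamma w) * z * Beta x w"
        by (rule gam_split) (use x0 w0 z in auto)
      also have "\<dots> \<le> (z powr (x-1) / Gamma x) * (z powr (w-1) / Gamma w) * z * Beta be ga"
        by (intro mult_left_mono Beta_real_mono) (use x0 w0 z assms Gamma_real_pos[of x] Gamma_real_pos[of w] in auto)
      finally have "z powr (x+w-1) / Gamma (x+w) \<le> (z powr (x-1) / Gamma x) * (z powr (w-1) / Gamma w) * z * Beta be ga" .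
      then have ineq: "\<bar>a i\<bar> * \<bar>b (n - i)\<bar> * (z powr (x+w-1) / Gamma (x+w))
         \<le> \<bar>a i\<bar> * \<bar>b (n - i)\<bar> * ((z powr (x-1) / Gamma x) * (z powr (w-1) / Gamma w) * z * Beta be ga)"
        by (intro mult_left_mono) auto
      show "\<bar>a i\<bar> * \<bar>b (n - i)\<bar> * (z powr (real n * al + (be + ga) - 1) / Gamma (real n * al + (be + ga)))
          \<le> z * Beta be ga * (A i * B (n - i))"
      proof -
        have "A i = \<bar>a i\<bar> * (z powr (x-1) / Gamma x)" by (simp add: A_def x_def)
        moreover have "B (n-i) = \<bar>b (n-i)\<bar> * (z powr (w-1) / Gamma w)" by (simp add: B_def w_def)
        ultimately show ?thesis unfolding xw using ineq by (simp only: ) (simp add: algebra_simps)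
      qed
    qed
    also have "\<dots> = z * Beta be ga * (\<Sum>i\<le>n. A i * B (n - i))"
      by (simp add: sum_distrib_left)
    finally show "norm (\<bar>cp a b n\<bar> * z powr (real n * al + (be + ga) - 1) / Gamma (real n * al + (be + ga)))
         \<le> z * Beta be ga * (\<Sum>i\<le>n. A i * B (n - i))" .
  qed
qed

lemma term_int:
  assumes "0 < al" "0 < be" "0 < ga" "0 < z"
  shows "has_bochner_integral lborel
     (\<lambda>y. indicator {0<..<z} y * (\<Sum>i\<le>n. (a i * (z-y) powr (real i*al+be-1) / Gamma (real i*al+be))
            * (b (n-i) * y powr (real (n-i)*al+ga-1) / Gamma (real (n-i)*al+ga))))
     (cp a b n * z powr (real n*al+be+ga-1) / Gamma (real n*al+be+ga))"
proof -
  define x where "x i = real i*al+be" for i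
  define w where "w i = real (n-i)*al+ga" for i
  have x0: "0 < x i" for i using assms by (auto simp: x_def intro!: add_nonneg_pos)
  have w0: "0 < w i" for i using assms by (auto simp: w_def intro!: add_nonneg_pos)
  have xw: "x i + w i = real n*al+be+ga" if "i \<le> n" for i
    using that by (simp add: x_def w_def of_nat_diff algebra_simps)
  have F: "(\<lambda>y. indicator {0<..<z} y * (\<Sum>i\<le>n. (a i * (z-y) powr (real i*al+be-1) / Gamma (real i*al+be))
            * (b (n-i) * y powr (real (n-i)*al+ga-1) / Gamma (real (n-i)*al+ga))))
     = (\<lambda>y. \<Sum>i\<le>n. (a i * b (n-i) / (Gamma (x i) * Gamma (w i))) *
          (indicator {0<..<z} y * ((z - y) powr (x i-1) * y powr (w i-1))))"
    by (auto simp: sum_distrib_left x_def w_def intro!: sum.cong)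
  have "has_bochner_integral lborel
     (\<lambda>y. \<Sum>i\<le>n. (a i * b (n-i) / (Gamma (x i) * Gamma (w i))) *
          (indicator {0<..<z} y * ((z - y) powr (x i-1) * y powr (w i-1))))
     (\<Sum>i\<le>n. (a i * b (n-i) / (Gamma (x i) * Gamma (w i))) * (z powr (x i + w i - 1) * Beta (x i) (w i)))"
    by (intro has_bochner_integral_sum has_bochner_integral_mult_right beta_bochner x0 w0 assms)
  also have "(\<Sum>i\<le>n. (a i * b (n-i) / (Gamma (x i) * Gamma (w i))) * (z powr (x i + w i - 1) * Beta (x i) (w i)))
     = (\<Sum>i\<le>n. a i * b (n-i) * (z powr (real n*al+be+ga-1) / Gamma (real n*al+be+ga)))"
  proof (intro sum.cong refl)
    fix i assume "i \<in> {..n}"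
    then have e: "x i + w i = real n*al+be+ga" using xw by auto
    have "Gamma (x i) > 0" "Gamma (w i) > 0" using x0 w0 by (auto intro: Gamma_real_pos)
    then show "(a i * b (n-i) / (Gamma (x i) * Gamma (w i))) * (z powr (x i + w i - 1) * Beta (x i) (w i))
       = a i * b (n-i) * (z powr (real n*al+be+ga-1) / Gamma (real n*al+be+ga))"
      unfolding Beta_def e by (simp add: field_simps)
  qed
  also have "\<dots> = cp a b n * z powr (real n*al+be+ga-1) / Gamma (real n*al+be+ga)"
    unfolding cp_def atLeast0AtMost sum_distrib_right by (simp add: mult.assoc sum_divide_distrib)
  finally show ?thesis unfolding F .
qed

lemma conv_series:
  assumes al: "0 < al" and be: "0 < be" and ga: "0 < ga"
    and gooda: "good al a be" and goodb: "good al b ga"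
    and na: "\<And>x. 0 < x \<Longrightarrow> 0 \<le> sd al a be x"
    and nb: "\<And>x. 0 < x \<Longrightarrow> 0 \<le> sd al b ga x"
    and z: "0 < z"
  shows "(\<integral>\<^sup>+y. ennreal (if 0 < z - y then sd al a be (z - y) else 0)
              * ennreal (if 0 < y then sd al b ga y else 0) \<partial>lborel)
         = ennreal (sd al (cp a b) (be+ga) z) \<and> 0 \<le> sd al (cp a b) (be+ga) z"
proof -
  define A where "A i y = a i * (z-y) powr (real i*al+be-1) / Gamma (real i*al+be)" for i y
  define B where "B j y = b j * y powr (real j*al+ga-1) / Gamma (real j*al+ga)" for j y
  define T where "T n y = indicator {0<..<z} y * (\<Sum>i\<le>n. A i y * B (n-i) y)" for n y
  define Tabs where "Tabs n y = indicator {0<..<z} y * (\<Sum>i\<le>n. \<bar>A i y\<bar> * \<bar>B (n-i) y\<bar>)" for n y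
  define f where "f y = indicator {0<..<z} y * (sd al a be (z-y) * sd al b ga y)" for y
  define c where "c n = cp a b n * z powr (real n*al+be+ga-1) / Gamma (real n*al+be+ga)" for n
  define cabs where "cabs n = cp (\<lambda>i. \<bar>a i\<bar>) (\<lambda>i. \<bar>b i\<bar>) n * z powr (real n*al+be+ga-1) / Gamma (real n*al+be+ga)" for n
  have hT: "has_bochner_integral lborel (T n) (c n)" for n
    unfolding T_def A_def B_def c_def by (rule term_int[OF al be ga z])
  have absA: "\<bar>A i y\<bar> = \<bar>a i\<bar> * (z-y) powr (real i*al+be-1) / Gamma (real i*al+be)" for i y
    using gpos[OF be, of al i] al by (simp add: A_def abs_mult)
  have absB: "\<bar>B i y\<bar> = \<bar>b i\<bar> * y powr (real i*al+ga-1) / Gamma (real i*al+ga)" for i y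
    using gpos[OF ga, of al i] al by (simp add: B_def abs_mult)
  have hTabs: "has_bochner_integral lborel (Tabs n) (cabs n)" for n
    unfolding Tabs_def absA absB cabs_def by (rule term_int[OF al be ga z])
  have pw: "summable (\<lambda>n. norm (T n y)) \<and> (\<lambda>n. T n y) sums f y" for y
  proof (cases "y \<in> {0<..<z}")
    case True
    then have y0: "0 < y" "0 < z - y" by auto
    have sA: "summable (\<lambda>i. norm (A i y))"
      using gooda y0 by (simp add: good_def absA)
    have sB: "summable (\<lambda>i. norm (B i y))"
      using goodb y0 by (simp add: good_def absB)
    have "(\<lambda>k. \<Sum>i\<le>k. A i y * B (k - i) y) sums ((\<Sum>k. A k y) * (\<Sum>k. B k y))"
      by (rule Cauchy_product_sums[OF sA sB])
    moreover have "(\<Sum>k. A k y) = sd al a be (z-y)" by (simp add: sd_def A_def)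
    moreover have "(\<Sum>k. B k y) = sd al b ga y" by (simp add: sd_def B_def)
    ultimately have S: "(\<lambda>n. T n y) sums f y" using True by (simp add: T_def f_def)
    have "summable (\<lambda>k. \<Sum>i\<le>k. norm (A i y) * norm (B (k - i) y))"
      by (rule summable_Cauchy_product) (use sA sB in auto)
    then have "summable (\<lambda>n. norm (T n y))"
      by (rule summable_comparison_test'[where N=0])
         (use True in \<open>auto simp: T_def intro!: order.trans[OF sum_abs] simp: abs_mult\<close>)
    with S show ?thesis by simp
  next
    case False
    then show ?thesis by (simp add: T_def f_def)
  qed
  have intT: "integrable lborel (T n)" for n using hT[of n] by (rule integrable.intros)
  have sumc: "summable cabs"
  proof -
    have "good al (cp (\<lambda>i. \<bar>a i\<bar>) (\<lambda>i. \<bar>b i\<bar>)) (be + ga)"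
      by (rule good_cp) (use al be ga gooda goodb in \<open>auto simp: good_abs\<close>)
    then have "summable (\<lambda>n. \<bar>cp (\<lambda>i. \<bar>a i\<bar>) (\<lambda>i. \<bar>b i\<bar>) n\<bar> * z powr (real n * al + (be + ga) - 1) / Gamma (real n * al + (be + ga)))"
      using z by (simp add: good_def)
    moreover have "cp (\<lambda>i. \<bar>a i\<bar>) (\<lambda>i. \<bar>b i\<bar>) n \<ge> 0" for n
      by (simp add: cp_def sum_nonneg)
    ultimately show ?thesis unfolding cabs_def[abs_def] by (simp add: add.assoc)
  qed
  have sumI: "summable (\<lambda>n. \<integral>y. norm (T n y) \<partial>lborel)"
  proof (rule summable_comparison_test'[OF sumc])
    fix n :: nat
    have "(\<integral>y. norm (T n y) \<partial>lborel) \<le> (\<integral>y. Tabs n y \<partial>lborel)"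
      by (intro integral_mono integrable_norm intT integrable.intros[OF hTabs])
         (auto simp: T_def Tabs_def abs_mult intro!: mult_left_mono order.trans[OF sum_abs])
    also have "\<dots> = cabs n" using hTabs by (rule has_bochner_integral_integral_eq)
    finally show "norm (\<integral>y. norm (T n y) \<partial>lborel) \<le> cabs n" by simp
  qed
  have fT: "f = (\<lambda>y. \<Sum>n. T n y)" using pw by (auto simp: sums_iff)
  have intf: "integrable lborel f" unfolding fT
    by (rule integrable_suminf[OF intT _ sumI]) (use pw in auto)
  have "integral\<^sup>L lborel f = (\<Sum>n. integral\<^sup>L lborel (T n))" unfolding fT
    by (rule integral_suminf[OF intT _ sumI]) (use pw in auto)
  also have "\<dots> = (\<Sum>n. c n)" using hT[THEN has_bochner_integral_integral_eq] by simp
  also have "\<dots> = sd al (cp a b) (be+ga) z" by (simp add: c_def sd_def add.assoc)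
  finally have If: "integral\<^sup>L lborel f = sd al (cp a b) (be+ga) z" .
  have f0: "0 \<le> f y" for y
    using na[of "z-y"] nb[of y] by (auto simp: f_def indicator_def)
  have "(\<integral>\<^sup>+y. ennreal (if 0 < z - y then sd al a be (z - y) else 0)
              * ennreal (if 0 < y then sd al b ga y else 0) \<partial>lborel) = (\<integral>\<^sup>+y. ennreal (f y) \<partial>lborel)"
  proof (intro nn_integral_cong)
    fix y :: real
    show "ennreal (if 0 < z - y then sd al a be (z - y) else 0) * ennreal (if 0 < y then sd al b ga y else 0) = ennreal (f y)"
      using na[of "z-y"] nb[of y] by (auto simp: f_def indicator_def ennreal_mult)
  qed
  also have "\<dots> = ennreal (integral\<^sup>L lborel f)"
    by (rule nn_integral_eq_integral[OF intf]) (use f0 in auto)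
  finally show ?thesis using If integral_nonneg_AE[of f lborel] f0 by auto
qed

lemma nn_integral_incseq_indicator:
  fixes h :: "real \<Rightarrow> ennreal"
  assumes inc: "incseq A" and meas: "\<And>i. A i \<in> sets borel" and hm: "h \<in> borel_measurable borel"
  shows "(\<integral>\<^sup>+x. h x * indicator (\<Union>i. A i) x \<partial>lborel) = (SUP i. \<integral>\<^sup>+x. h x * indicator (A i) x \<partial>lborel)"
proof -
  have "(\<integral>\<^sup>+x. h x * indicator (\<Union>i. A i) x \<partial>lborel) = (\<integral>\<^sup>+x. (SUP i. h x * indicator (A i) x) \<partial>lborel)"
  proof (intro nn_integral_cong)
    fix x
    show "h x * indicator (\<Union>i. A i) x = (SUP i. h x * indicator (A i) x)"
    proof (cases "\<exists>i. x \<in> A i")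
      case True
      then obtain i where i: "x \<in> A i" by auto
      show ?thesis
      proof (rule antisym)
        show "h x * indicator (\<Union>i. A i) x \<le> (SUP i. h x * indicator (A i) x)"
          using i by (intro SUP_upper2[of i]) (auto simp: indicator_def)
        show "(SUP i. h x * indicator (A i) x) \<le> h x * indicator (\<Union>i. A i) x"
          by (intro SUP_least) (auto simp: indicator_def)
      qed
    next
      case False
      then show ?thesis by (simp add: indicator_def)
    qed
  qed
  also have "\<dots> = (SUP i. \<integral>\<^sup>+x. h x * indicator (A i) x \<partial>lborel)"
  proof (rule nn_integral_monotone_convergence_SUP)
    show "incseq (\<lambda>i x. h x * indicator (A i) x)"
      using inc by (auto simp: incseq_def le_fun_def indicator_def intro!: mult_left_mono)
    show "(\<lambda>x. h x * indicator (A i) x) \<in> borel_measurable lborel" for i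
      using hm meas[of i] by measurable
  qed
  finally show ?thesis .
qed

lemma moment_nn:
  fixes r b c :: real
  assumes r: "0 < r" and b: "0 < b" and c: "0 < c"
  shows "(\<integral>\<^sup>+y. ennreal (indicator {0<..} y * (y powr (r-1) * exp (- c * y powr b))) \<partial>lborel)
       = ennreal (Gamma (r/b) / (b * c powr (r/b)))"
proof -
  define s where "s = r / b"
  have s: "0 < s" using r b by (simp add: s_def)
  define f where "f t = t powr (s-1) / exp t" for t :: real
  define g where "g y = c * y powr b" for y :: real
  define g' where "g' y = c * b * y powr (b-1)" for y :: real
  define lo where "lo n = (1 / (real (Suc n) * c)) powr (1/b)" for n
  define hi where "hi n = (real (Suc n) / c) powr (1/b)" for n
  have lo0: "0 < lo n" for n using c by (simp add: lo_def)
  have hi0: "0 < hi n" for n using c by (simp add: hi_def)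
  have glo: "g (lo n) = 1 / real (Suc n)" for n
    using c b by (simp add: g_def lo_def powr_powr)
  have ghi: "g (hi n) = real (Suc n)" for n
    using c b by (simp add: g_def hi_def powr_powr)
  have gmono: "g x \<le> g y \<longleftrightarrow> x \<le> y" if "0 < x" "0 < y" for x y
  proof
    assume "g x \<le> g y"
    then have "x powr b \<le> y powr b" using c by (simp add: g_def)
    then show "x \<le> y" using that b powr_less_mono2[of b y x] by (meson not_le less_imp_le)
  next
    assume "x \<le> y"
    then show "g x \<le> g y" using that b c by (simp add: g_def powr_mono2)
  qed
  have lohi: "lo n \<le> hi n" for n
    using gmono[OF lo0 hi0, of n n] glo[of n] ghi[of n] by (simp add: field_simps)
  have inI: "y \<in> {lo n..hi n} \<longleftrightarrow> (0 < y \<and> g y \<in> {1/real (Suc n)..real (Suc n)})" for y n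
  proof
    assume "y \<in> {lo n..hi n}"
    then have "0 < y" "lo n \<le> y" "y \<le> hi n" using lo0[of n] by auto
    then show "0 < y \<and> g y \<in> {1/real (Suc n)..real (Suc n)}"
      using gmono[OF lo0 \<open>0<y\<close>, of n] gmono[OF \<open>0<y\<close> hi0, of n] glo[of n] ghi[of n] by auto
  next
    assume "0 < y \<and> g y \<in> {1/real (Suc n)..real (Suc n)}"
    then show "y \<in> {lo n..hi n}"
      using gmono[OF lo0 _, of y n] gmono[OF _ hi0, of y n] glo[of n] ghi[of n] by auto
  qed
  have incT: "incseq (\<lambda>n. {1/real (Suc n)..real (Suc n)})"
    by (auto simp: incseq_def intro: order.trans[rotated] divide_left_mono)
  have UT: "(\<Union>n. {1/real (Suc n)..real (Suc n)}) = {0<..}"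
  proof (intro equalityI subsetI)
    fix t :: real assume "t \<in> (\<Union>n. {1/real (Suc n)..real (Suc n)})"
    then obtain n where "1/real (Suc n) \<le> t" by auto
    moreover have "0 < 1/real (Suc n)" by simp
    ultimately have "0 < t" by linarith
    then show "t \<in> {0<..}" by simp
  next
    fix t :: real assume "t \<in> {0<..}"
    then have t: "0 < t" by simp
    obtain n1 :: nat where n1: "t \<le> real n1" using real_arch_simple by blast
    obtain n2 :: nat where n2: "1/t \<le> real n2" using real_arch_simple by blast
    define n where "n = max n1 n2"
    have "t \<le> real (Suc n)" using n1 by (simp add: n_def)
    moreover have "1/real (Suc n) \<le> t"
    proof -
      have "1/t \<le> real (Suc n)" using n2 by (simp add: n_def)
      then show ?thesis using t by (simp add: field_simps)
    qed
    ultimately show "t \<in> (\<Union>n. {1/real (Suc n)..real (Suc n)})" by auto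
  qed
  have incY: "incseq (\<lambda>n. {lo n..hi n})"
    unfolding incseq_def
  proof (intro allI impI subsetI)
    fix m n y assume mn: "m \<le> n" and y: "y \<in> {lo m..hi m}"
    then have "0 < y \<and> g y \<in> {1/real (Suc m)..real (Suc m)}" using inI by blast
    moreover have "{1/real (Suc m)..real (Suc m)} \<subseteq> {1/real (Suc n)..real (Suc n)}"
      using incT mn by (auto simp: incseq_def)
    ultimately show "y \<in> {lo n..hi n}" using inI by blast
  qed
  have UY: "(\<Union>n. {lo n..hi n}) = {0<..}"
  proof (intro equalityI subsetI)
    fix y assume "y \<in> (\<Union>n. {lo n..hi n})" then show "y \<in> {0<..}" using inI by auto
  next
    fix y :: real assume "y \<in> {0<..}"
    then have y: "0 < y" by simp
    then have "g y \<in> (\<Union>n. {1/real (Suc n)..real (Suc n)})" using UT c by (simp add: g_def)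
    then obtain n where "g y \<in> {1/real (Suc n)..real (Suc n)}" by auto
    then show "y \<in> (\<Union>n. {lo n..hi n})" using inI y by blast
  qed
  have sub: "(\<integral>\<^sup>+t. ennreal (f t * indicator {g (lo n)..g (hi n)} t) \<partial>lborel)
      = (\<integral>\<^sup>+y. ennreal (f (g y) * g' y * indicator {lo n..hi n} y) \<partial>lborel)" for n
  proof (rule nn_integral_substitution)
    show "set_borel_measurable borel {g (lo n)..g (hi n)} f"
      unfolding set_borel_measurable_def f_def by measurable
    show "(g has_real_derivative g' x) (at x)" if "x \<in> {lo n..hi n}" for x
    proof -
      have "0 < x" using that lo0[of n] by auto
      then show ?thesis unfolding g_def g'_def
        by (auto intro!: derivative_eq_intros simp: algebra_simps)
    qed
    show "continuous_on {lo n..hi n} g'"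
      unfolding g'_def using lo0[of n] by (auto intro!: continuous_intros)
    show "0 \<le> g' x" if "x \<in> {lo n..hi n}" for x
      using b c by (simp add: g'_def)
    show "lo n \<le> hi n" by (rule lohi)
  qed
  have fg: "f (g y) * g' y = (b * c powr s) * (y powr (r-1) * exp (- c * y powr b))" if "0 < y" for y
  proof -
    have "f (g y) * g' y = (c * y powr b) powr (s-1) * c * b * y powr (b-1) / exp (c * y powr b)"
      by (simp add: f_def g_def g'_def)
    also have "(c * y powr b) powr (s-1) = c powr (s-1) * y powr (b*(s-1))"
      using that c by (simp add: powr_mult powr_powr)
    also have "c powr (s-1) * y powr (b*(s-1)) * c * b * y powr (b-1)
        = b * (c powr (s-1) * c powr 1) * (y powr (b*(s-1)) * y powr (b-1))"
      using c by simp
    also have "c powr (s-1) * c powr 1 = c powr s" by (simp only: powr_add[symmetric]) simp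
    also have "y powr (b*(s-1)) * y powr (b-1) = y powr (r-1)"
      using b by (simp add: powr_add[symmetric] s_def algebra_simps)
    finally show ?thesis by (simp add: exp_minus field_simps)
  qed
  have "ennreal (Gamma s) = (\<integral>\<^sup>+t. ennreal (indicator {0..} t * t powr (s - 1) / exp t) \<partial>lborel)"
    by (rule Gamma_conv_nn_integral_real[OF s])
  also have "\<dots> = (\<integral>\<^sup>+t. ennreal (f t) * indicator (\<Union>n. {1/real (Suc n)..real (Suc n)}) t \<partial>lborel)"
    unfolding UT by (intro nn_integral_cong) (auto simp: f_def indicator_def)
  also have "\<dots> = (SUP n. \<integral>\<^sup>+t. ennreal (f t) * indicator {1/real (Suc n)..real (Suc n)} t \<partial>lborel)"
    by (rule nn_integral_incseq_indicator[OF incT]) (auto simp: f_def)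
  also have "\<dots> = (SUP n. \<integral>\<^sup>+y. ennreal (b * c powr s) * ennreal (y powr (r-1) * exp (- c * y powr b)) * indicator {lo n..hi n} y \<partial>lborel)"
  proof (intro SUP_cong refl)
    fix n
    have "(\<integral>\<^sup>+t. ennreal (f t) * indicator {1/real (Suc n)..real (Suc n)} t \<partial>lborel)
        = (\<integral>\<^sup>+t. ennreal (f t * indicator {g (lo n)..g (hi n)} t) \<partial>lborel)"
      unfolding glo ghi by (intro nn_integral_cong) (auto simp: indicator_def)
    also have "\<dots> = (\<integral>\<^sup>+y. ennreal (f (g y) * g' y * indicator {lo n..hi n} y) \<partial>lborel)"
      by (rule sub)
    also have "\<dots> = (\<integral>\<^sup>+y. ennreal (b * c powr s) * ennreal (y powr (r-1) * exp (- c * y powr b)) * indicator {lo n..hi n} y \<partial>lborel)"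
    proof (intro nn_integral_cong)
      fix y
      show "ennreal (f (g y) * g' y * indicator {lo n..hi n} y) = ennreal (b * c powr s) * ennreal (y powr (r-1) * exp (- c * y powr b)) * indicator {lo n..hi n} y"
      proof (cases "y \<in> {lo n..hi n}")
        case True
        then have "0 < y" using lo0[of n] by auto
        then show ?thesis using True b c by (simp add: fg ennreal_mult)
      qed simp
    qed
    finally show "(\<integral>\<^sup>+t. ennreal (f t) * indicator {1/real (Suc n)..real (Suc n)} t \<partial>lborel)
        = (\<integral>\<^sup>+y. ennreal (b * c powr s) * ennreal (y powr (r-1) * exp (- c * y powr b)) * indicator {lo n..hi n} y \<partial>lborel)" .
  qed
  also have "\<dots> = (\<integral>\<^sup>+y. ennreal (b * c powr s) * ennreal (y powr (r-1) * exp (- c * y powr b)) * indicator (\<Union>n. {lo n..hi n}) y \<partial>lborel)"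
    by (rule nn_integral_incseq_indicator[OF incY, symmetric]) auto
  also have "\<dots> = ennreal (b * c powr s) * (\<integral>\<^sup>+y. ennreal (indicator {0<..} y * (y powr (r-1) * exp (- c * y powr b))) \<partial>lborel)"
    unfolding UY by (subst nn_integral_cmult[symmetric]) (auto intro!: nn_integral_cong simp: indicator_def)
  finally have eq: "ennreal (Gamma s) = ennreal (b * c powr s) * (\<integral>\<^sup>+y. ennreal (indicator {0<..} y * (y powr (r-1) * exp (- c * y powr b))) \<partial>lborel)" .
  have K: "0 < b * c powr s" using b c by simp
  have "(\<integral>\<^sup>+y. ennreal (indicator {0<..} y * (y powr (r-1) * exp (- c * y powr b))) \<partial>lborel)
      = ennreal (1 / (b * c powr s)) * (ennreal (b * c powr s) * (\<integral>\<^sup>+y. ennreal (indicator {0<..} y * (y powr (r-1) * exp (- c * y powr b))) \<partial>lborel))"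
  proof -
    have one: "ennreal (1 / (b * c powr s)) * ennreal (b * c powr s) = 1"
      using K b c by (simp add: ennreal_mult[symmetric])
    show ?thesis by (simp only: mult.assoc[symmetric] one mult_1)
  qed
  also have "\<dots> = ennreal (1 / (b * c powr s)) * ennreal (Gamma s)" by (simp add: eq)
  also have "\<dots> = ennreal (Gamma (r/b) / (b * c powr (r/b)))"
    using K s by (simp add: ennreal_mult[symmetric] s_def Gamma_real_pos less_imp_le)
  finally show ?thesis .
qed

lemma key_const:
  fixes aM aQ muM muQ OmM OmQ :: real and i :: nat
  assumes aM: "0 < aM" and aQ: "0 < aQ" and mM: "0 < muM" and mQ: "0 < muQ"
    and OM: "0 < OmM" and OQ: "0 < OmQ"
  shows "(aM * muM powr muM / (OmM powr (aM*muM) * Gamma muM)) * (aQ * muQ powr muQ / (OmQ powr (aQ*muQ) * Gamma muQ))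
           * (muM / OmM powr aM)^i / (aQ * (muQ / OmQ powr aQ) powr (aM*(muM + real i)/aQ + muQ))
         = aM / (Gamma muM * Gamma muQ) * rho_tilde aM aQ muM muQ OmM OmQ powr (aM*(muM + real i))"
    (is "?L = ?R")
proof -
  have gM: "0 < Gamma muM" and gQ: "0 < Gamma muQ" using mM mQ by (auto intro: Gamma_real_pos)
  have Lp: "0 < ?L" using assms gM gQ by (auto intro!: mult_pos_pos divide_pos_pos)
  have Rp: "0 < ?R" using assms gM gQ by (auto simp: rho_tilde_def intro!: mult_pos_pos divide_pos_pos)
  have "ln ?L = ln ?R"
    using assms gM gQ
    by (simp add: ln_mult_pos ln_divide_pos ln_realpow rho_tilde_def field_simps)
  then show ?thesis using Lp Rp by simp
qed

lemma expand_pt: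
  fixes y t p q a b kQ cM cQ \<kappa> :: real
  assumes y: "0 < y" and t: "0 < t"
  shows "(\<lambda>i. cM*cQ*t powr (p-1) * (\<kappa> * t powr a)^i / fact i * (y powr (p + a*real i + q - 1) * exp(-kQ * y powr b)))
     sums (y * (cM * (t*y) powr (p-1) * exp (\<kappa> * (t*y) powr a)) * (cQ * y powr (q-1) * exp (-kQ * y powr b)))"
proof -
  define C where "C = y * cM * (t*y) powr (p-1) * cQ * y powr (q-1) * exp (-kQ * y powr b)"
  have "(\<lambda>n. (\<kappa> * (t*y) powr a)^n /\<^sub>R fact n) sums exp (\<kappa> * (t*y) powr a)"
    by (rule exp_converges)
  then have "(\<lambda>n. (\<kappa> * (t*y) powr a)^n / fact n) sums exp (\<kappa> * (t*y) powr a)"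
    by (simp add: divide_inverse_commute scaleR_conv_of_real)
  then have S: "(\<lambda>n. C * ((\<kappa> * (t*y) powr a)^n / fact n)) sums (C * exp (\<kappa> * (t*y) powr a))"
    by (rule sums_mult)
  have F: "C * ((\<kappa> * (t*y) powr a)^n / fact n)
     = cM*cQ*t powr (p-1) * (\<kappa> * t powr a)^n / fact n * (y powr (p + a*real n + q - 1) * exp(-kQ * y powr b))" for n
  proof -
    have e1: "(\<kappa> * (t*y) powr a)^n = (\<kappa> * t powr a)^n * y powr (real n * a)"
      using y t by (simp add: powr_mult power_mult_distrib powr_power)
    have e2: "y * y powr (p-1) * y powr (q-1) * y powr (real n * a) = y powr (1 + (p-1) + (q-1) + real n * a)"
      using y by (simp only: powr_add) simp
    have e3: "1 + (p-1) + (q-1) + real n * a = p + a*real n + q - 1" by (simp add: algebra_simps)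
    have e4: "(t*y) powr (p-1) = t powr (p-1) * y powr (p-1)" using y t by (simp add: powr_mult)
    show ?thesis
      unfolding C_def e1 e4 e3[symmetric] e2[symmetric] by (simp add: field_simps)
  qed
  have V: "C * exp (\<kappa> * (t*y) powr a) = y * (cM * (t*y) powr (p-1) * exp (\<kappa> * (t*y) powr a)) * (cQ * y powr (q-1) * exp (-kQ * y powr b))"
    by (simp add: C_def)
  show ?thesis using S unfolding F V .
qed

lemma pow_bound:
  fixes a b k c :: real
  assumes a: "0 < a" and ab: "a < b" and k: "0 \<le> k" and c: "0 < c"
  shows "\<exists>K. \<forall>y>0. k * y powr a \<le> K + c * y powr b"
proof -
  define y0 where "y0 = (k/c) powr (1/(b-a))"
  define K where "K = k * y0 powr a"
  have K0: "0 \<le> K" using k by (simp add: K_def)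
  have "k * y powr a \<le> K + c * y powr b" if y: "0 < y" for y
  proof (cases "k/c \<le> y powr (b-a)")
    case True
    then have "k \<le> c * y powr (b-a)" using c by (simp add: field_simps)
    then have "k * y powr a \<le> c * y powr (b-a) * y powr a" by (rule mult_right_mono) simp
    also have "c * y powr (b-a) * y powr a = c * y powr b"
      by (simp add: mult.assoc powr_add[symmetric])
    finally show ?thesis using K0 by simp
  next
    case False
    then have lt: "y powr (b-a) < k/c" by simp
    have "y = (y powr (b-a)) powr (1/(b-a))" using y ab by (simp add: powr_powr)
    also have "\<dots> < (k/c) powr (1/(b-a))"
      using lt ab by (intro powr_less_mono2) auto
    finally have "y < y0" by (simp add: y0_def)
    then have "y powr a \<le> y0 powr a" using y a by (intro powr_mono2) auto
    then have "k * y powr a \<le> K" unfolding K_def using k by (rule mult_left_mono)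
    then show ?thesis using c by (simp add: add_increasing2)
  qed
  then show ?thesis by blast
qed

lemma alpha_mu_pdf_nonneg:
  assumes "0 < a" "0 < mu" "0 < Om"
  shows "0 \<le> alpha_mu_pdf a mu Om x"
  using assms Gamma_real_pos[of mu] by (simp add: alpha_mu_pdf_def)

lemma alpha_mu_pdf_nonpos: "x \<le> 0 \<Longrightarrow> alpha_mu_pdf a mu Om x = 0"
  by (simp add: alpha_mu_pdf_def)

lemma coefeq:
  fixes aM aQ muM muQ OmM OmQ t :: real and i :: nat
  assumes aM: "0 < aM" and aQ: "0 < aQ" and mM: "0 < muM" and mQ: "0 < muQ"
    and OM: "0 < OmM" and OQ: "0 < OmQ" and t: "0 < t"
  shows "(aM * muM powr muM / (OmM powr (aM*muM) * Gamma muM)) * (aQ * muQ powr muQ / (OmQ powr (aQ*muQ) * Gamma muQ))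
           * t powr (aM*muM-1) * (\<sigma> * (muM / OmM powr aM) * t powr aM)^i / fact i
           * (Gamma ((aM*muM + aM*real i + aQ*muQ) / aQ) / (aQ * (muQ / OmQ powr aQ) powr ((aM*muM + aM*real i + aQ*muQ) / aQ)))
       = \<sigma>^i * (-1)^i * (aM / (Gamma muM * Gamma muQ) * u_coef aM aQ muM muQ OmM OmQ i)
           * t powr (real i * aM + aM*muM - 1) / Gamma (real i * aM + aM*muM)"
proof -
  define cM where "cM = aM * muM powr muM / (OmM powr (aM*muM) * Gamma muM)"
  define cQ where "cQ = aQ * muQ powr muQ / (OmQ powr (aQ*muQ) * Gamma muQ)"
  define kM where "kM = muM / OmM powr aM"
  define kQ where "kQ = muQ / OmQ powr aQ"
  define K where "K = aM / (Gamma muM * Gamma muQ)"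
  define \<rho> where "\<rho> = rho_tilde aM aQ muM muQ OmM OmQ"
  define e where "e = aM*(muM + real i)/aQ + muQ"
  have re: "(aM*muM + aM*real i + aQ*muQ) / aQ = e" using aQ by (simp add: e_def field_simps)
  have key: "cM * cQ * kM^i / (aQ * kQ powr e) = K * \<rho> powr (aM*(muM + real i))"
    unfolding cM_def cQ_def kM_def kQ_def K_def \<rho>_def e_def by (rule key_const[OF assms(1-6)])
  have g1: "Gamma (aM * (real i + muM)) = Gamma (real i * aM + aM*muM)" by (simp add: algebra_simps)
  have g1p: "0 < Gamma (real i * aM + aM*muM)" using aM mM by (intro Gamma_real_pos add_nonneg_pos) auto
  have g2: "Gamma (aM * (real i + muM) / aQ + muQ) = Gamma e" by (simp add: e_def algebra_simps)
  have rp: "0 < \<rho>" using assms by (simp add: \<rho>_def rho_tilde_def)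
  have rinv: "\<rho> powr (- aM * (muM + real i)) = 1 / \<rho> powr (aM*(muM + real i))"
    by (simp add: powr_minus divide_inverse)
  have tp: "t powr (aM*muM-1) * (t powr aM)^i = t powr (real i * aM + aM*muM - 1)"
    using t by (simp add: powr_power powr_add[symmetric] algebra_simps)
  have u: "u_coef aM aQ muM muQ OmM OmQ i = (-1)^i * Gamma (real i * aM + aM*muM) * \<rho> powr (aM*(muM + real i)) / fact i * Gamma e"
    unfolding u_coef_def \<rho>_def[symmetric] g1 g2 rinv by simp
  have L: "cM * cQ * t powr (aM*muM-1) * (\<sigma> * kM * t powr aM)^i / fact i * (Gamma e / (aQ * kQ powr e))
      = \<sigma>^i * (cM * cQ * kM^i / (aQ * kQ powr e)) * (t powr (aM*muM-1) * (t powr aM)^i) * Gamma e / fact i"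
    by (simp add: power_mult_distrib field_simps)
  show ?thesis
    unfolding cM_def[symmetric] cQ_def[symmetric] kM_def[symmetric] kQ_def[symmetric] K_def[symmetric] re L key tp u
    using g1p by (simp add: field_simps)
qed

lemma abs_sign: "0 \<le> (X::real) \<Longrightarrow> \<bar>(-1)^i * X\<bar> = (-1)^i * ((-1)^i * X)"
proof -
  assume "0 \<le> X"
  moreover have "(-1::real)^i * (-1)^i = 1" by (simp add: power_mult_distrib[symmetric])
  ultimately show ?thesis by (simp add: abs_mult mult.assoc[symmetric])
qed

lemma u_coef_abs:
  assumes "0 < aM" "0 < aQ" "0 < muM" "0 < muQ" "0 < OmM" "0 < OmQ"
  shows "\<bar>u_coef aM aQ muM muQ OmM OmQ i\<bar> = (-1)^i * u_coef aM aQ muM muQ OmM OmQ i"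
proof -
  define X where "X = Gamma (aM * (real i + muM)) / (fact i * rho_tilde aM aQ muM muQ OmM OmQ powr (- aM * (muM + real i)))
       * Gamma (aM * (real i + muM) / aQ + muQ)"
  have "0 < Gamma (aM * (real i + muM))" using assms by (intro Gamma_real_pos) auto
  moreover have "0 < Gamma (aM * (real i + muM) / aQ + muQ)" using assms
    by (intro Gamma_real_pos add_nonneg_pos) auto
  moreover have "0 < rho_tilde aM aQ muM muQ OmM OmQ" using assms by (simp add: rho_tilde_def)
  ultimately have "0 \<le> X" unfolding X_def by simp
  moreover have "u_coef aM aQ muM muQ OmM OmQ i = (-1)^i * X" unfolding u_coef_def X_def by simp
  ultimately show ?thesis using abs_sign by simp
qed

lemma ratio_series:
  fixes aM aQ muM muQ OmM OmQ t :: real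
  assumes aM: "0 < aM" and aMQ: "aM < aQ" and mM: "0 < muM" and mQ: "0 < muQ"
    and OM: "0 < OmM" and OQ: "0 < OmQ" and t: "0 < t"
  defines "u \<equiv> (\<lambda>i. aM / (Gamma muM * Gamma muQ) * u_coef aM aQ muM muQ OmM OmQ i)"
  shows "(\<integral>\<^sup>+y. ennreal y * ennreal (alpha_mu_pdf aM muM OmM (t*y)) * ennreal (alpha_mu_pdf aQ muQ OmQ y) \<partial>lborel)
           = ennreal (sd aM u (aM*muM) t)
     \<and> 0 \<le> sd aM u (aM*muM) t
     \<and> summable (\<lambda>i. \<bar>u i\<bar> * t powr (real i * aM + aM*muM - 1) / Gamma (real i * aM + aM*muM))"
proof -
  have aQ: "0 < aQ" using aM aMQ by simp
  define cM where "cM = aM * muM powr muM / (OmM powr (aM*muM) * Gamma muM)"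
  define kM where "kM = muM / OmM powr aM"
  define cQ where "cQ = aQ * muQ powr muQ / (OmQ powr (aQ*muQ) * Gamma muQ)"
  define kQ where "kQ = muQ / OmQ powr aQ"
  have gM: "0 < Gamma muM" and gQ: "0 < Gamma muQ" using mM mQ by (auto intro: Gamma_real_pos)
  have cM0: "0 < cM" using aM mM OM gM by (simp add: cM_def)
  have cQ0: "0 < cQ" using aQ mQ OQ gQ by (simp add: cQ_def)
  have kM0: "0 < kM" using mM OM by (simp add: kM_def)
  have kQ0: "0 < kQ" using mQ OQ by (simp add: kQ_def)
  define p where "p = aM*muM"
  define q where "q = aQ*muQ"
  have p0: "0 < p" and q0: "0 < q" using aM mM aQ mQ by (auto simp: p_def q_def)
  have pdfM: "alpha_mu_pdf aM muM OmM m = cM * m powr (p-1) * exp (- kM * m powr aM)" if "0 < m" for m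
    using that by (simp add: alpha_mu_pdf_def cM_def kM_def p_def)
  have pdfQ: "alpha_mu_pdf aQ muQ OmQ m = cQ * m powr (q-1) * exp (- kQ * m powr aQ)" if "0 < m" for m
    using that by (simp add: alpha_mu_pdf_def cQ_def kQ_def q_def)
  define r where "r i = p + aM*real i + q" for i
  have r0: "0 < r i" for i using p0 q0 aM by (simp add: r_def add_pos_nonneg add_nonneg_pos)
  define D where "D i = cM*cQ*t powr (p-1) * (- kM * t powr aM)^i / fact i" for i
  define Dabs where "Dabs i = cM*cQ*t powr (p-1) * (kM * t powr aM)^i / fact i" for i
  have Dabs0: "0 \<le> Dabs i" for i using cM0 cQ0 kM0 by (simp add: Dabs_def)
  have absD: "\<bar>D i\<bar> = Dabs i" for i
    using cM0 cQ0 kM0 by (simp add: D_def Dabs_def abs_mult power_abs)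
  define G where "G i y = indicator {0<..} y * (y powr (r i - 1) * exp (- kQ * y powr aQ))" for i y
  define mom where "mom i = Gamma (r i / aQ) / (aQ * kQ powr (r i / aQ))" for i
  have G0: "0 \<le> G i y" for i y by (simp add: G_def)
  have Gm: "G i \<in> borel_measurable lborel" for i unfolding G_def by measurable
  have mom0: "0 \<le> mom i" for i using r0[of i] aQ kQ0 by (simp add: mom_def Gamma_real_pos less_imp_le)
  have Gnn: "(\<integral>\<^sup>+y. ennreal (G i y) \<partial>lborel) = ennreal (mom i)" for i
    unfolding G_def mom_def by (rule moment_nn[OF r0 aQ kQ0])
  have hG: "has_bochner_integral lborel (G i) (mom i)" for i
    by (rule has_bochner_integral_nn_integral[OF Gm _ mom0 Gnn]) (simp add: G0)
  define F where "F y = indicator {0<..} y * (y * (cM * (t*y) powr (p-1) * exp (- kM * (t*y) powr aM)) * (cQ * y powr (q-1) * exp (-kQ * y powr aQ)))" for y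
  define Fabs where "Fabs y = indicator {0<..} y * (y * (cM * (t*y) powr (p-1) * exp (kM * (t*y) powr aM)) * (cQ * y powr (q-1) * exp (-kQ * y powr aQ)))" for y
  have sF: "(\<lambda>i. D i * G i y) sums F y" for y
  proof (cases "0 < y")
    case True
    have "(\<lambda>i. cM*cQ*t powr (p-1) * ((-kM) * t powr aM)^i / fact i * (y powr (p + aM*real i + q - 1) * exp(-kQ * y powr aQ)))
     sums (y * (cM * (t*y) powr (p-1) * exp ((-kM) * (t*y) powr aM)) * (cQ * y powr (q-1) * exp (-kQ * y powr aQ)))"
      by (rule expand_pt[OF True t])
    then show ?thesis using True by (simp add: D_def G_def F_def r_def)
  next
    case False
    then show ?thesis by (simp add: G_def F_def)
  qed
  have sFabs: "(\<lambda>i. Dabs i * G i y) sums Fabs y" for y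
  proof (cases "0 < y")
    case True
    have "(\<lambda>i. cM*cQ*t powr (p-1) * (kM * t powr aM)^i / fact i * (y powr (p + aM*real i + q - 1) * exp(-kQ * y powr aQ)))
     sums (y * (cM * (t*y) powr (p-1) * exp (kM * (t*y) powr aM)) * (cQ * y powr (q-1) * exp (-kQ * y powr aQ)))"
      by (rule expand_pt[OF True t])
    then show ?thesis using True by (simp add: Dabs_def G_def Fabs_def r_def)
  next
    case False
    then show ?thesis by (simp add: G_def Fabs_def)
  qed
  obtain Kb where Kb: "\<forall>y>0. (kM * t powr aM) * y powr aM \<le> Kb + (kQ/2) * y powr aQ"
    using pow_bound[OF aM aMQ _ _, of "kM * t powr aM" "kQ/2"] kM0 kQ0 by auto
  define E where "E = cM*cQ*t powr (p-1) * exp Kb"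
  have E0: "0 \<le> E" using cM0 cQ0 by (simp add: E_def)
  have Fbound: "Fabs y \<le> E * (indicator {0<..} y * (y powr (p + q - 1) * exp (- (kQ/2) * y powr aQ)))" for y
  proof (cases "0 < y")
    case True
    have e1: "(t*y) powr aM = t powr aM * y powr aM" using t True by (simp add: powr_mult)
    have e2: "(t*y) powr (p-1) = t powr (p-1) * y powr (p-1)" using t True by (simp add: powr_mult)
    have e3: "y * y powr (p-1) * y powr (q-1) = y powr (p+q-1)"
    proof -
      have "y powr (p+q-1) = y powr (1 + (p-1) + (q-1))" by (simp add: algebra_simps)
      also have "\<dots> = y * y powr (p-1) * y powr (q-1)" using True by (simp only: powr_add) simp
      finally show ?thesis by simp
    qed
    have eqF: "Fabs y = (cM*cQ*t powr (p-1)) * (y * y powr (p-1) * y powr (q-1)) * (exp (kM * t powr aM * y powr aM) * exp (-kQ * y powr aQ))"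
      using True by (simp add: Fabs_def e1 e2 mult_ac)
    have ex: "exp (kM * t powr aM * y powr aM) * exp (-kQ * y powr aQ) \<le> exp Kb * exp (- (kQ/2) * y powr aQ)"
    proof -
      have "kM * t powr aM * y powr aM + (-kQ * y powr aQ) \<le> Kb + (- (kQ/2) * y powr aQ)"
        using Kb True by (auto simp: algebra_simps)
      then show ?thesis by (simp add: exp_add[symmetric])
    qed
    have C0: "0 \<le> (cM*cQ*t powr (p-1)) * y powr (p+q-1)" using cM0 cQ0 by simp
    have "Fabs y = (cM*cQ*t powr (p-1)) * y powr (p+q-1) * (exp (kM * t powr aM * y powr aM) * exp (-kQ * y powr aQ))"
      unfolding eqF e3 ..
    also have "\<dots> \<le> (cM*cQ*t powr (p-1)) * y powr (p+q-1) * (exp Kb * exp (- (kQ/2) * y powr aQ))"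
      by (rule mult_left_mono[OF ex C0])
    also have "\<dots> = E * (indicator {0<..} y * (y powr (p + q - 1) * exp (- (kQ/2) * y powr aQ)))"
      using True by (simp add: E_def)
    finally show ?thesis .
  next
    case False
    then show ?thesis by (simp add: Fabs_def)
  qed
  have Fabs0: "0 \<le> Fabs y" for y
    using cM0 cQ0 t by (auto simp: Fabs_def indicator_def)
  have Fabs_fin: "(\<integral>\<^sup>+y. ennreal (Fabs y) \<partial>lborel) < \<infinity>"
  proof -
    have "(\<integral>\<^sup>+y. ennreal (Fabs y) \<partial>lborel) \<le> (\<integral>\<^sup>+y. ennreal E * ennreal (indicator {0<..} y * (y powr (p + q - 1) * exp (- (kQ/2) * y powr aQ))) \<partial>lborel)"
      by (intro nn_integral_mono) (use Fbound E0 in \<open>auto simp: ennreal_mult[symmetric]\<close>)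
    also have "\<dots> = ennreal E * (\<integral>\<^sup>+y. ennreal (indicator {0<..} y * (y powr (p + q - 1) * exp (- (kQ/2) * y powr aQ))) \<partial>lborel)"
      by (rule nn_integral_cmult) simp
    also have "\<dots> = ennreal E * ennreal (Gamma ((p+q)/aQ) / (aQ * (kQ/2) powr ((p+q)/aQ)))"
      using moment_nn[of "p+q" aQ "kQ/2"] p0 q0 aQ kQ0 by simp
    also have "\<dots> < \<infinity>" by (simp add: ennreal_mult_less_top)
    finally show ?thesis .
  qed
  have Dm: "(\<lambda>y. Dabs i * G i y) \<in> borel_measurable lborel" for i using Gm[of i] by measurable
  have sumabs: "summable (\<lambda>i. Dabs i * mom i)"
  proof (rule summable_suminf_not_top)
    show "0 \<le> Dabs i * mom i" for i using Dabs0 mom0 by simp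
    have "(\<Sum>i. ennreal (Dabs i * mom i)) = (\<Sum>i. \<integral>\<^sup>+y. ennreal (Dabs i * G i y) \<partial>lborel)"
    proof (intro suminf_cong)
      fix i
      have "(\<integral>\<^sup>+y. ennreal (Dabs i * G i y) \<partial>lborel) = (\<integral>\<^sup>+y. ennreal (Dabs i) * ennreal (G i y) \<partial>lborel)"
        using Dabs0 G0 by (simp add: ennreal_mult)
      also have "\<dots> = ennreal (Dabs i) * (\<integral>\<^sup>+y. ennreal (G i y) \<partial>lborel)"
        by (rule nn_integral_cmult) (use Gm in simp)
      finally show "ennreal (Dabs i * mom i) = (\<integral>\<^sup>+y. ennreal (Dabs i * G i y) \<partial>lborel)"
        using Gnn Dabs0 mom0 by (simp add: ennreal_mult)
    qed
    also have "\<dots> = (\<integral>\<^sup>+y. (\<Sum>i. ennreal (Dabs i * G i y)) \<partial>lborel)"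
      by (rule nn_integral_suminf[symmetric]) (use Dm in simp)
    also have "\<dots> = (\<integral>\<^sup>+y. ennreal (Fabs y) \<partial>lborel)"
    proof (intro nn_integral_cong)
      fix y
      show "(\<Sum>i. ennreal (Dabs i * G i y)) = ennreal (Fabs y)"
        by (rule suminf_ennreal_eq[OF _ sFabs]) (simp add: Dabs0 G0)
    qed
    finally show "(\<Sum>i. ennreal (Dabs i * mom i)) \<noteq> \<top>" using Fabs_fin by simp
  qed
  have hT: "has_bochner_integral lborel (\<lambda>y. D i * G i y) (D i * mom i)" for i
    by (rule has_bochner_integral_mult_right[OF hG])
  have hTabs: "has_bochner_integral lborel (\<lambda>y. Dabs i * G i y) (Dabs i * mom i)" for i
    by (rule has_bochner_integral_mult_right[OF hG])
  have intT: "integrable lborel (\<lambda>y. D i * G i y)" for i using hT[of i] by (rule integrable.intros)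
  have normT: "\<bar>D i * G i y\<bar> = Dabs i * G i y" for i y using absD G0 by (simp add: abs_mult)
  have AEs: "AE y in lborel. summable (\<lambda>i. norm (D i * G i y))"
  proof (rule AE_I2)
    fix y
    have "summable (\<lambda>i. Dabs i * G i y)" using sFabs[of y] by (rule sums_summable)
    then show "summable (\<lambda>i. norm (D i * G i y))" by (simp add: normT)
  qed
  have sI: "summable (\<lambda>i. \<integral>y. norm (D i * G i y) \<partial>lborel)"
    using sumabs by (simp add: normT hG[THEN has_bochner_integral_integral_eq])
  have Fsum: "F = (\<lambda>y. \<Sum>i. D i * G i y)" using sF by (auto simp: sums_iff)
  have intF: "integrable lborel F" unfolding Fsum by (rule integrable_suminf[OF intT AEs sI])
  have IF: "integral\<^sup>L lborel F = (\<Sum>i. D i * mom i)" unfolding Fsum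
    using integral_suminf[OF intT AEs sI] hG[THEN has_bochner_integral_integral_eq] by simp
  have F0: "0 \<le> F y" for y
    using cM0 cQ0 t by (auto simp: F_def indicator_def)
  have Dm_eq: "D i * mom i = u i * t powr (real i * aM + aM*muM - 1) / Gamma (real i * aM + aM*muM)" for i
  proof -
    have "D i * mom i = (aM * muM powr muM / (OmM powr (aM*muM) * Gamma muM)) * (aQ * muQ powr muQ / (OmQ powr (aQ*muQ) * Gamma muQ))
           * t powr (aM*muM-1) * ((-1) * (muM / OmM powr aM) * t powr aM)^i / fact i
           * (Gamma ((aM*muM + aM*real i + aQ*muQ) / aQ) / (aQ * (muQ / OmQ powr aQ) powr ((aM*muM + aM*real i + aQ*muQ) / aQ)))"
      unfolding D_def mom_def r_def cM_def cQ_def kM_def kQ_def p_def q_def by simp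
    also have "\<dots> = (-1)^i * (-1)^i * u i * t powr (real i * aM + aM*muM - 1) / Gamma (real i * aM + aM*muM)"
      unfolding coefeq[OF aM aQ mM mQ OM OQ t, of "-1" i] u_def by simp
    also have "(-1::real)^i * (-1)^i = 1" by (simp add: power_mult_distrib[symmetric])
    finally show ?thesis by simp
  qed
  have Dabs_eq: "Dabs i * mom i = \<bar>u i\<bar> * t powr (real i * aM + aM*muM - 1) / Gamma (real i * aM + aM*muM)" for i
  proof -
    have "Dabs i * mom i = (aM * muM powr muM / (OmM powr (aM*muM) * Gamma muM)) * (aQ * muQ powr muQ / (OmQ powr (aQ*muQ) * Gamma muQ))
           * t powr (aM*muM-1) * (1 * (muM / OmM powr aM) * t powr aM)^i / fact i
           * (Gamma ((aM*muM + aM*real i + aQ*muQ) / aQ) / (aQ * (muQ / OmQ powr aQ) powr ((aM*muM + aM*real i + aQ*muQ) / aQ)))"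
      unfolding Dabs_def mom_def r_def cM_def cQ_def kM_def kQ_def p_def q_def by simp
    also have "\<dots> = 1^i * (-1)^i * u i * t powr (real i * aM + aM*muM - 1) / Gamma (real i * aM + aM*muM)"
      unfolding coefeq[OF aM aQ mM mQ OM OQ t, of 1 i] u_def by simp
    finally have A: "Dabs i * mom i = 1^i * (-1)^i * u i * t powr (real i * aM + aM*muM - 1) / Gamma (real i * aM + aM*muM)" .
    have B: "(-1)^i * u i = \<bar>u i\<bar>"
      using u_coef_abs[OF aM aQ mM mQ OM OQ, of i] gM gQ aM
      by (simp add: u_def abs_mult mult.left_commute)
    show ?thesis using A B by simp
  qed
  have sd_eq: "sd aM u (aM*muM) t = (\<Sum>i. D i * mom i)"
    by (simp add: sd_def Dm_eq)
  have lhs: "(\<integral>\<^sup>+y. ennreal y * ennreal (alpha_mu_pdf aM muM OmM (t*y)) * ennreal (alpha_mu_pdf aQ muQ OmQ y) \<partial>lborel)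
      = (\<integral>\<^sup>+y. ennreal (F y) \<partial>lborel)"
  proof (intro nn_integral_cong)
    fix y :: real
    show "ennreal y * ennreal (alpha_mu_pdf aM muM OmM (t*y)) * ennreal (alpha_mu_pdf aQ muQ OmQ y) = ennreal (F y)"
    proof (cases "0 < y")
      case True
      then have "0 < t*y" using t by simp
      have "F y = y * alpha_mu_pdf aM muM OmM (t*y) * alpha_mu_pdf aQ muQ OmQ y"
        using True \<open>0 < t*y\<close> by (simp add: F_def pdfM pdfQ)
      moreover have "0 \<le> alpha_mu_pdf aM muM OmM (t*y)" "0 \<le> alpha_mu_pdf aQ muQ OmQ y"
        using aM mM OM aQ mQ OQ by (auto intro!: alpha_mu_pdf_nonneg)
      ultimately show ?thesis using True by (simp add: ennreal_mult)
    next
      case False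
      then show ?thesis by (simp add: F_def ennreal_neg)
    qed
  qed
  also have "\<dots> = ennreal (integral\<^sup>L lborel F)"
    by (rule nn_integral_eq_integral[OF intF]) (simp add: F0)
  finally show ?thesis
    using IF sd_eq integral_nonneg_AE[of F lborel] F0 sumabs Dabs_eq by simp
qed

lemma (in prob_space) indep_var_lborel:
  assumes "indep_var borel X borel Y"
  shows "indep_var lborel X lborel Y"
proof -
  have e1: "case_bool lborel lborel = (\<lambda>_::bool. lborel)" by (rule ext) (simp split: bool.split)
  have e2: "case_bool borel borel = (\<lambda>_::bool. borel :: real measure)" by (rule ext) (simp split: bool.split)
  show ?thesis using assms by (simp add: indep_var_def indep_vars_def bool.case_eq_if)
qed

lemma (in prob_space) distributed_ratio:
  fixes X Y :: "'a \<Rightarrow> real" and f g :: "real \<Rightarrow> ennreal"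
  assumes X: "distributed M lborel X f" and Y: "distributed M lborel Y g"
    and ind: "indep_var borel X borel Y"
    and g0: "\<And>y. y \<le> 0 \<Longrightarrow> g y = 0"
  shows "distributed M lborel (\<lambda>w. X w / Y w) (\<lambda>t. \<integral>\<^sup>+y. ennreal y * f (t*y) * g y \<partial>lborel)"
  unfolding distributed_def
proof safe
  have fg[measurable]: "f \<in> borel_measurable borel" "g \<in> borel_measurable borel"
    using distributed_borel_measurable[OF X] distributed_borel_measurable[OF Y] by simp_all
  have XYm[measurable]: "X \<in> borel_measurable M" "Y \<in> borel_measurable M"
    using distributed_measurable[OF X] distributed_measurable[OF Y] by simp_all
  show "(\<lambda>t. \<integral>\<^sup>+y. ennreal y * f (t*y) * g y \<partial>lborel) \<in> borel_measurable lborel"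
    by measurable
  show "random_variable lborel (\<lambda>w. X w / Y w)" by simp
  have XY: "distributed M (lborel \<Otimes>\<^sub>M lborel) (\<lambda>x. (X x, Y x)) (\<lambda>(x, y). f x * g y)"
    by (rule distributed_joint_indep[OF _ _ X Y indep_var_lborel[OF ind]])
       (auto intro: lborel.sigma_finite_measure_axioms)
  show "distr M lborel (\<lambda>w. X w / Y w) = density lborel (\<lambda>t. \<integral>\<^sup>+y. ennreal y * f (t*y) * g y \<partial>lborel)"
  proof (rule measure_eqI)
    show "sets (distr M lborel (\<lambda>w. X w / Y w)) = sets (density lborel (\<lambda>t. \<integral>\<^sup>+y. ennreal y * f (t*y) * g y \<partial>lborel))"
      by simp
    fix A assume "A \<in> sets (distr M lborel (\<lambda>w. X w / Y w))"
    then have A[measurable]: "A \<in> sets borel" by simp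
    define S where "S = (\<lambda>p::real\<times>real. fst p / snd p) -` A \<inter> space (lborel \<Otimes>\<^sub>M lborel)"
    have dm: "(\<lambda>p::real\<times>real. fst p / snd p) \<in> borel_measurable (lborel \<Otimes>\<^sub>M lborel)" by measurable
    have S: "S \<in> sets (lborel \<Otimes>\<^sub>M lborel)" unfolding S_def
      using measurable_sets[OF dm, of A] A by simp
    have "emeasure (distr M lborel (\<lambda>w. X w / Y w)) A = emeasure M ((\<lambda>w. X w / Y w) -` A \<inter> space M)"
      by (rule emeasure_distr) auto
    also have "(\<lambda>w. X w / Y w) -` A \<inter> space M = (\<lambda>x. (X x, Y x)) -` S \<inter> space M"
      by (auto simp: S_def space_pair_measure)
    also have "emeasure M ((\<lambda>x. (X x, Y x)) -` S \<inter> space M) = emeasure (distr M (lborel \<Otimes>\<^sub>M lborel) (\<lambda>x. (X x, Y x))) S"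
      by (rule emeasure_distr[symmetric]) (use S in \<open>auto intro: distributed_measurable[OF XY]\<close>)
    also have "\<dots> = emeasure (density (lborel \<Otimes>\<^sub>M lborel) (\<lambda>(x, y). f x * g y)) S"
      by (simp add: distributed_distr_eq_density[OF XY])
    also have "\<dots> = (\<integral>\<^sup>+p. (\<lambda>(x, y). f x * g y) p * indicator S p \<partial>(lborel \<Otimes>\<^sub>M lborel))"
      by (rule emeasure_density) (use S in \<open>auto intro: distributed_borel_measurable[OF XY]\<close>)
    also have "\<dots> = (\<integral>\<^sup>+y. (\<integral>\<^sup>+x. f x * g y * indicator A (x / y) \<partial>lborel) \<partial>lborel)"
      by (subst lborel_pair.nn_integral_snd[symmetric])
         (auto intro!: nn_integral_cong simp: S_def space_pair_measure indicator_def)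
    also have "\<dots> = (\<integral>\<^sup>+y. (\<integral>\<^sup>+t. ennreal y * f (t*y) * g y * indicator A t \<partial>lborel) \<partial>lborel)"
    proof (rule nn_integral_cong)
      fix y :: real
      show "(\<integral>\<^sup>+x. f x * g y * indicator A (x / y) \<partial>lborel) = (\<integral>\<^sup>+t. ennreal y * f (t*y) * g y * indicator A t \<partial>lborel)"
      proof (cases "0 < y")
        case True
        have "(\<integral>\<^sup>+x. f x * g y * indicator A (x / y) \<partial>lborel)
            = \<bar>y\<bar> * (\<integral>\<^sup>+t. f (0 + y*t) * g y * indicator A ((0 + y*t) / y) \<partial>lborel)"
          using True by (intro nn_integral_real_affine) auto
        also have "\<dots> = ennreal y * (\<integral>\<^sup>+t. f (t*y) * g y * indicator A t \<partial>lborel)"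
          using True by (simp add: mult.commute)
        also have "\<dots> = (\<integral>\<^sup>+t. ennreal y * (f (t*y) * g y * indicator A t) \<partial>lborel)"
          by (rule nn_integral_cmult[symmetric]) simp
        finally show ?thesis by (simp add: mult.assoc)
      next
        case False
        then show ?thesis by (simp add: g0)
      qed
    qed
    also have "\<dots> = (\<integral>\<^sup>+t. (\<integral>\<^sup>+y. ennreal y * f (t*y) * g y * indicator A t \<partial>lborel) \<partial>lborel)"
      by (rule lborel_pair.Fubini') simp
    also have "\<dots> = (\<integral>\<^sup>+t. (\<integral>\<^sup>+y. ennreal y * f (t*y) * g y \<partial>lborel) * indicator A t \<partial>lborel)"
      by (intro nn_integral_cong nn_integral_multc) simp
    also have "\<dots> = emeasure (density lborel (\<lambda>t. \<integral>\<^sup>+y. ennreal y * f (t*y) * g y \<partial>lborel)) A"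
      by (rule emeasure_density[symmetric]) auto
    finally show "emeasure (distr M lborel (\<lambda>w. X w / Y w)) A = emeasure (density lborel (\<lambda>t. \<integral>\<^sup>+y. ennreal y * f (t*y) * g y \<partial>lborel)) A" .
  qed
qed

definition dens :: "real \<Rightarrow> (nat \<Rightarrow> real) \<Rightarrow> real \<Rightarrow> real \<Rightarrow> ennreal" where
  "dens al c be = (\<lambda>z. ennreal (if 0 < z then sd al c be z else 0))"

lemma ratio_zero:
  fixes t :: real
  assumes "t \<le> 0"
  shows "(\<integral>\<^sup>+y. ennreal y * ennreal (alpha_mu_pdf aM muM OmM (t*y)) * ennreal (alpha_mu_pdf aQ muQ OmQ y) \<partial>lborel) = 0"
proof -
  have "(\<integral>\<^sup>+y. ennreal y * ennreal (alpha_mu_pdf aM muM OmM (t*y)) * ennreal (alpha_mu_pdf aQ muQ OmQ y) \<partial>lborel)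
      = (\<integral>\<^sup>+(y::real). 0 \<partial>lborel)"
  proof (rule nn_integral_cong)
    fix y :: real
    show "ennreal y * ennreal (alpha_mu_pdf aM muM OmM (t*y)) * ennreal (alpha_mu_pdf aQ muQ OmQ y) = 0"
    proof (cases "0 < y")
      case True
      then have "t * y \<le> 0" using assms by (simp add: mult_nonpos_nonneg)
      then show ?thesis by (simp add: alpha_mu_pdf_nonpos)
    next
      case False
      then show ?thesis by (simp add: ennreal_neg)
    qed
  qed
  then show ?thesis by simp
qed

lemma (in prob_space) branch_dist:
  fixes aM aQ muM muQ OmM OmQ :: real
  assumes aM: "0 < aM" and aMQ: "aM < aQ" and mM: "0 < muM" and mQ: "0 < muQ"
    and OM: "0 < OmM" and OQ: "0 < OmQ"
    and Mv: "distributed M lborel Mv (\<lambda>m. ennreal (alpha_mu_pdf aM muM OmM m))"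
    and Qv: "distributed M lborel Qv (\<lambda>q. ennreal (alpha_mu_pdf aQ muQ OmQ q))"
    and ind: "indep_var borel Mv borel Qv"
  defines "u \<equiv> (\<lambda>i. aM / (Gamma muM * Gamma muQ) * u_coef aM aQ muM muQ OmM OmQ i)"
  shows "distributed M lborel (\<lambda>w. Mv w / Qv w) (dens aM u (aM*muM))
     \<and> good aM u (aM*muM) \<and> (\<forall>z>0. 0 \<le> sd aM u (aM*muM) z)"
proof -
  have D: "distributed M lborel (\<lambda>w. Mv w / Qv w)
      (\<lambda>t. \<integral>\<^sup>+y. ennreal y * ennreal (alpha_mu_pdf aM muM OmM (t*y)) * ennreal (alpha_mu_pdf aQ muQ OmQ y) \<partial>lborel)"
    by (rule distributed_ratio[OF Mv Qv ind]) (simp add: alpha_mu_pdf_nonpos)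
  have RS: "\<And>t. 0 < t \<Longrightarrow> (\<integral>\<^sup>+y. ennreal y * ennreal (alpha_mu_pdf aM muM OmM (t*y)) * ennreal (alpha_mu_pdf aQ muQ OmQ y) \<partial>lborel)
           = ennreal (sd aM u (aM*muM) t)
     \<and> 0 \<le> sd aM u (aM*muM) t
     \<and> summable (\<lambda>i. \<bar>u i\<bar> * t powr (real i * aM + aM*muM - 1) / Gamma (real i * aM + aM*muM))"
    unfolding u_def by (rule ratio_series[OF aM aMQ mM mQ OM OQ])
  have "(\<lambda>t. \<integral>\<^sup>+y. ennreal y * ennreal (alpha_mu_pdf aM muM OmM (t*y)) * ennreal (alpha_mu_pdf aQ muQ OmQ y) \<partial>lborel)
      = dens aM u (aM*muM)"
  proof
    fix t :: real
    show "(\<integral>\<^sup>+y. ennreal y * ennreal (alpha_mu_pdf aM muM OmM (t*y)) * ennreal (alpha_mu_pdf aQ muQ OmQ y) \<partial>lborel)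
      = dens aM u (aM*muM) t"
      using RS[of t] ratio_zero[of t] by (cases "0 < t") (auto simp: dens_def)
  qed
  with D have "distributed M lborel (\<lambda>w. Mv w / Qv w) (dens aM u (aM*muM))" by simp
  moreover have "good aM u (aM*muM)" using RS by (simp add: good_def)
  moreover have "\<forall>z>0. 0 \<le> sd aM u (aM*muM) z" using RS by simp
  ultimately show ?thesis by blast
qed

lemma (in prob_space) conv_step:
  assumes al: "0 < al" and be: "0 < be" and ga: "0 < ga"
    and ga_: "good al a be" "good al b ga"
    and na: "\<forall>x>0. 0 \<le> sd al a be x" and nb: "\<forall>x>0. 0 \<le> sd al b ga x"
    and X: "distributed M lborel X (dens al a be)" and Y: "distributed M lborel Y (dens al b ga)"
    and ind: "indep_var borel X borel Y"
  shows "distributed M lborel (\<lambda>w. X w + Y w) (dens al (cp a b) (be + ga))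
     \<and> good al (cp a b) (be + ga) \<and> (\<forall>x>0. 0 \<le> sd al (cp a b) (be + ga) x)"
proof -
  have D: "distributed M lborel (\<lambda>w. X w + Y w) (\<lambda>x. \<integral>\<^sup>+y. dens al a be (x - y) * dens al b ga y \<partial>lborel)"
    by (rule distributed_convolution[OF ind X Y])
  have CS: "\<And>z. 0 < z \<Longrightarrow> (\<integral>\<^sup>+y. ennreal (if 0 < z - y then sd al a be (z - y) else 0)
              * ennreal (if 0 < y then sd al b ga y else 0) \<partial>lborel)
         = ennreal (sd al (cp a b) (be+ga) z) \<and> 0 \<le> sd al (cp a b) (be+ga) z"
    by (rule conv_series[OF al be ga ga_]) (use na nb in auto)
  have "(\<lambda>x. \<integral>\<^sup>+y. dens al a be (x - y) * dens al b ga y \<partial>lborel) = dens al (cp a b) (be + ga)"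
  proof
    fix z :: real
    show "(\<integral>\<^sup>+y. dens al a be (z - y) * dens al b ga y \<partial>lborel) = dens al (cp a b) (be + ga) z"
    proof (cases "0 < z")
      case True
      then show ?thesis using CS[OF True] by (simp add: dens_def)
    next
      case False
      have "(\<integral>\<^sup>+y. dens al a be (z - y) * dens al b ga y \<partial>lborel) = (\<integral>\<^sup>+(y::real). 0 \<partial>lborel)"
        by (rule nn_integral_cong) (use False in \<open>auto simp: dens_def\<close>)
      then show ?thesis using False by (simp add: dens_def)
    qed
  qed
  with D have "distributed M lborel (\<lambda>w. X w + Y w) (dens al (cp a b) (be + ga))" by simp
  moreover have "good al (cp a b) (be + ga)" by (rule good_cp[OF al be ga ga_])
  moreover have "\<forall>x>0. 0 \<le> sd al (cp a b) (be + ga) x" using CS by simp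
  ultimately show ?thesis by blast
qed

lemma (in prob_space) indep_partial_sum:
  fixes X :: "nat \<Rightarrow> 'a \<Rightarrow> real"
  assumes ind: "indep_vars (\<lambda>_. borel) X {1..L}" and n: "Suc n \<le> L"
  shows "indep_var borel (\<lambda>w. \<Sum>l=1..n. X l w) borel (X (Suc n))"
proof -
  define K where "K b = (if b then {1..n} else {Suc n})" for b :: bool
  have R: "indep_vars (\<lambda>b. PiM (K b) (\<lambda>_. borel)) (\<lambda>b \<omega>. restrict (\<lambda>i. X i \<omega>) (K b)) UNIV"
    by (rule indep_vars_restrict[OF ind]) (use n in \<open>auto simp: K_def disjoint_family_on_def\<close>)
  define Yf where "Yf b = (if b then (\<lambda>v::nat \<Rightarrow> real. \<Sum>l=1..n. v l) else (\<lambda>v. v (Suc n)))" for b :: bool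
  have C: "indep_vars (\<lambda>_. borel) (\<lambda>b x. Yf b (restrict (\<lambda>i. X i x) (K b))) UNIV"
  proof (rule indep_vars_compose2[OF R])
    fix b :: bool
    show "Yf b \<in> measurable (PiM (K b) (\<lambda>_. borel)) borel"
    proof (cases b)
      case True
      then show ?thesis unfolding Yf_def K_def
        by (auto intro!: borel_measurable_sum measurable_component_singleton)
    next
      case False
      then show ?thesis unfolding Yf_def K_def
        by (auto intro!: measurable_component_singleton)
    qed
  qed
  have eq: "(\<lambda>b x. Yf b (restrict (\<lambda>i. X i x) (K b))) = case_bool (\<lambda>w. \<Sum>l=1..n. X l w) (X (Suc n))"
    by (auto simp: fun_eq_iff Yf_def K_def split: bool.split intro!: sum.cong)
  have eb: "case_bool borel borel = (\<lambda>_::bool. borel :: real measure)" by (rule ext) (simp split: bool.split)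
  show ?thesis using C unfolding indep_var_def eq eb .
qed

lemma powr_int_0:
  fixes s z :: real
  assumes s: "0 < s" and z: "0 \<le> z"
  shows "has_bochner_integral lborel (\<lambda>t. indicator {0<..z} t * t powr (s-1)) (z powr s / s)"
proof (rule has_bochner_integral_nn_integral)
  show "(\<lambda>t. indicator {0<..z} t * t powr (s-1)) \<in> borel_measurable lborel" by measurable
  show "AE x in lborel. 0 \<le> indicator {0<..z} x * x powr (s-1)" by (auto simp: indicator_def)
  show "0 \<le> z powr s / s" using s by simp
  have "(\<integral>\<^sup>+t. ennreal (indicator {0..z} t * t powr (s-1)) \<partial>lborel) = ennreal (z powr (s-1+1) / (s-1+1))"
    by (rule nn_integral_has_integral_lebesgue) (use has_integral_powr_from_0[of "s-1" z] s z in auto)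
  moreover have "(\<integral>\<^sup>+t. ennreal (indicator {0..z} t * t powr (s-1)) \<partial>lborel)
      = (\<integral>\<^sup>+t. ennreal (indicator {0<..z} t * t powr (s-1)) \<partial>lborel)"
    by (rule nn_integral_cong) (auto simp: indicator_def)
  ultimately show "(\<integral>\<^sup>+t. ennreal (indicator {0<..z} t * t powr (s-1)) \<partial>lborel) = ennreal (z powr s / s)"
    by simp
qed

lemma (in prob_space) cdf_series:
  assumes al: "0 < al" and B: "0 < B" and g: "good al c B" and nn: "\<forall>x>0. 0 \<le> sd al c B x"
    and Z: "distributed M lborel Z (dens al c B)" and z: "0 \<le> z"
  shows "(\<lambda>i. c i * z powr (real i * al + B) / Gamma (1 + real i * al + B)) sums measure M {w \<in> space M. Z w \<le> z}"
proof -
  define s where "s i = real i * al + B" for i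
  have s0: "0 < s i" for i using al B by (simp add: s_def add_nonneg_pos)
  have sB: "B \<le> s i" for i using al by (simp add: s_def)
  have gs: "0 < Gamma (s i)" for i using s0 by simp
  have G1: "Gamma (1 + real i * al + B) = s i * Gamma (s i)" for i
  proof -
    have "s i \<notin> \<int>\<^sub>\<le>\<^sub>0" using s0[of i] nonpos_Ints_nonpos by force
    then show ?thesis using Gamma_plus1[of "s i"] by (simp add: s_def algebra_simps)
  qed
  define T where "T i t = c i / Gamma (s i) * (indicator {0<..z} t * t powr (s i - 1))" for i t
  define v where "v i = c i * z powr (real i * al + B) / Gamma (1 + real i * al + B)" for i
  define vabs where "vabs i = \<bar>c i\<bar> * z powr (real i * al + B) / Gamma (1 + real i * al + B)" for i
  have hT: "has_bochner_integral lborel (T i) (v i)" for i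
  proof -
    have "has_bochner_integral lborel (T i) (c i / Gamma (s i) * (z powr s i / s i))"
      unfolding T_def by (intro has_bochner_integral_mult_right powr_int_0 s0 z)
    moreover have "c i / Gamma (s i) * (z powr s i / s i) = v i"
      unfolding v_def G1 s_def[symmetric] using s0[of i] gs[of i] by (simp add: field_simps)
    ultimately show ?thesis by simp
  qed
  have hTa: "has_bochner_integral lborel (\<lambda>t. norm (T i t)) (vabs i)" for i
  proof -
    have "has_bochner_integral lborel (\<lambda>t. \<bar>c i\<bar> / Gamma (s i) * (indicator {0<..z} t * t powr (s i - 1))) (\<bar>c i\<bar> / Gamma (s i) * (z powr s i / s i))"
      by (intro has_bochner_integral_mult_right powr_int_0 s0 z)
    moreover have "\<bar>c i\<bar> / Gamma (s i) * (z powr s i / s i) = vabs i"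
      unfolding vabs_def G1 s_def[symmetric] using s0[of i] gs[of i] by (simp add: field_simps)
    moreover have "(\<lambda>t. norm (T i t)) = (\<lambda>t. \<bar>c i\<bar> / Gamma (s i) * (indicator {0<..z} t * t powr (s i - 1)))"
      using gs[of i] by (auto simp: T_def abs_mult indicator_def fun_eq_iff)
    ultimately show ?thesis by simp
  qed
  have intT: "integrable lborel (T i)" for i using hT[of i] by (rule integrable.intros)
  have sv: "summable vabs"
  proof (cases "z = 0")
    case True
    then show ?thesis unfolding vabs_def s_def[symmetric] using s0 by simp
  next
    case False
    then have zp: "0 < z" using z by simp
    have "summable (\<lambda>i. \<bar>c i\<bar> * z powr (real i * al + B - 1) / Gamma (real i * al + B))"
      using g zp by (simp add: good_def)
    then have S: "summable (\<lambda>i. z / B * (\<bar>c i\<bar> * z powr (real i * al + B - 1) / Gamma (real i * al + B)))"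
      by (rule summable_mult)
    show ?thesis
    proof (rule summable_comparison_test'[OF S])
      fix i :: nat
      have e: "vabs i = z / s i * (\<bar>c i\<bar> * z powr (s i - 1) / Gamma (s i))"
      proof -
        have "z powr (s i) = z * z powr (s i - 1)" using zp powr_add[of z 1 "s i - 1"] by simp
        then show ?thesis unfolding vabs_def G1 s_def[symmetric] using s0[of i] gs[of i] by (simp add: field_simps)
      qed
      have "z / s i \<le> z / B" using zp B sB[of i] by (intro divide_left_mono) auto
      then have "vabs i \<le> z / B * (\<bar>c i\<bar> * z powr (s i - 1) / Gamma (s i))"
        unfolding e by (rule mult_right_mono) (use gs[of i] in simp)
      moreover have "0 \<le> vabs i" unfolding vabs_def G1 s_def[symmetric] using gs[of i] s0[of i] by simp
      ultimately show "norm (vabs i) \<le> z / B * (\<bar>c i\<bar> * z powr (real i * al + B - 1) / Gamma (real i * al + B))"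
        by (simp add: s_def)
    qed
  qed
  have AEs: "AE t in lborel. summable (\<lambda>i. norm (T i t))"
  proof (rule AE_I2)
    fix t :: real
    show "summable (\<lambda>i. norm (T i t))"
    proof (cases "t \<in> {0<..z}")
      case True
      then have "summable (\<lambda>i. \<bar>c i\<bar> * t powr (real i * al + B - 1) / Gamma (real i * al + B))"
        using g by (simp add: good_def)
      moreover have "norm (T i t) = \<bar>c i\<bar> * t powr (real i * al + B - 1) / Gamma (real i * al + B)" for i
        using True gs[of i] by (simp add: T_def abs_mult s_def)
      ultimately show ?thesis by simp
    next
      case False
      then show ?thesis by (simp add: T_def)
    qed
  qed
  have sI: "summable (\<lambda>i. \<integral>t. norm (T i t) \<partial>lborel)"
    using sv hTa[THEN has_bochner_integral_integral_eq] by simp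
  define f where "f t = indicator {0<..z} t * sd al c B t" for t
  have fT: "f = (\<lambda>t. \<Sum>i. T i t)"
  proof
    fix t
    show "f t = (\<Sum>i. T i t)"
    proof (cases "t \<in> {0<..z}")
      case True
      have eqT: "(\<lambda>i. T i t) = (\<lambda>i. c i * t powr (real i * al + B - 1) / Gamma (real i * al + B))"
        using True by (auto simp: T_def s_def fun_eq_iff)
      have "f t = sd al c B t" using True by (simp add: f_def)
      also have "\<dots> = (\<Sum>i. c i * t powr (real i * al + B - 1) / Gamma (real i * al + B))"
        by (simp only: sd_def)
      also have "\<dots> = (\<Sum>i. T i t)" by (simp only: eqT)
      finally show ?thesis .
    next
      case False
      then show ?thesis by (simp add: T_def f_def)
    qed
  qed
  have intf: "integrable lborel f" unfolding fT by (rule integrable_suminf[OF intT AEs sI])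
  have sumsf: "v sums integral\<^sup>L lborel f"
    unfolding fT using sums_integral[OF intT AEs sI] hT[THEN has_bochner_integral_integral_eq] by simp
  have f0: "0 \<le> f t" for t using nn by (auto simp: f_def indicator_def)
  have Zm: "Z \<in> measurable M borel" using distributed_measurable[OF Z] by simp
  have "emeasure M {w \<in> space M. Z w \<le> z} = emeasure (distr M lborel Z) {..z}"
    using Zm by (subst emeasure_distr) (auto intro!: arg_cong[where f="emeasure M"])
  also have "\<dots> = emeasure (density lborel (dens al c B)) {..z}"
    by (simp add: distributed_distr_eq_density[OF Z])
  also have "\<dots> = (\<integral>\<^sup>+t. dens al c B t * indicator {..z} t \<partial>lborel)"
    by (rule emeasure_density) (use distributed_borel_measurable[OF Z] in auto)
  also have "\<dots> = (\<integral>\<^sup>+t. ennreal (f t) \<partial>lborel)"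
    by (rule nn_integral_cong) (auto simp: dens_def f_def indicator_def)
  also have "\<dots> = ennreal (integral\<^sup>L lborel f)"
    by (rule nn_integral_eq_integral[OF intf]) (simp add: f0)
  finally have "measure M {w \<in> space M. Z w \<le> z} = integral\<^sup>L lborel f"
    using integral_nonneg_AE[of f lborel] f0 by (simp add: measure_def)
  moreover have "v = (\<lambda>i. c i * z powr (real i * al + B) / Gamma (1 + real i * al + B))"
    by (simp add: v_def fun_eq_iff)
  ultimately show ?thesis using sumsf by simp
qed

lemma u_coef0_pos:
  assumes "0 < aM" "0 < aQ" "0 < muM" "0 < muQ" "0 < OmM" "0 < OmQ"
  shows "0 < u_coef aM aQ muM muQ OmM OmQ 0"
proof -
  have "0 < rho_tilde aM aQ muM muQ OmM OmQ" using assms by (simp add: rho_tilde_def)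
  moreover have "0 < Gamma (aM * muM)" using assms by simp
  moreover have "0 < Gamma (aM * muM / aQ + muQ)" using assms by (intro Gamma_real_pos add_pos_pos) auto
  ultimately show ?thesis by (simp add: u_coef_def)
qed

theorem proposition3:
  fixes P :: "'w measure"
    and L :: nat
    and aM aQ :: real
    and muM muQ OmM OmQ :: "nat \<Rightarrow> real"
    and Mv Qv :: "nat \<Rightarrow> 'w \<Rightarrow> real"
  assumes "prob_space P"
    and "L \<ge> 1"
    and "0 < aM" and "aM < aQ"
    and "\<forall>l\<in>{1..L}. 0 < muM l \<and> 0 < muQ l \<and> 0 < OmM l \<and> 0 < OmQ l"
    and "\<forall>l\<in>{1..L}. distributed P lborel (Mv l) (\<lambda>m. ennreal (alpha_mu_pdf aM (muM l) (OmM l) m))"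
    and "\<forall>l\<in>{1..L}. distributed P lborel (Qv l) (\<lambda>q. ennreal (alpha_mu_pdf aQ (muQ l) (OmQ l) q))"
    and "\<forall>l\<in>{1..L}. prob_space.indep_var P borel (Mv l) borel (Qv l)"
    and "prob_space.indep_vars P (\<lambda>_. borel) (\<lambda>l w. Mv l w / Qv l w) {1..L}"
  defines "delta \<equiv> delta_coef L
        (\<lambda>l. u_coef aM aQ (muM l) (muQ l) (OmM l) (OmQ l) 0)
        (\<lambda>l h. phi_coef (\<lambda>i. u_coef aM aQ (muM l) (muQ l) (OmM l) (OmQ l) i) h)"
    and "B \<equiv> aM * (\<Sum>l = 1..L. muM l)"
    and "C \<equiv> aM ^ L * (\<Prod>l = 1..L. 1 / (Gamma (muM l) * Gamma (muQ l)))"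
    and "Z \<equiv> \<lambda>w. \<Sum>l = 1..L. Mv l w / Qv l w"
  shows "(\<forall>z>0. summable (\<lambda>i. delta i * z powr (-1 + real i * aM + B) / Gamma (real i * aM + B)))
    \<and> distributed P lborel Z
        (\<lambda>z. ennreal (if 0 < z then
            C * (\<Sum>i. delta i * z powr (-1 + real i * aM + B) / Gamma (real i * aM + B))
          else 0))
    \<and> (\<forall>z\<ge>0. (\<lambda>i. C * (delta i * z powr (real i * aM + B) / Gamma (1 + real i * aM + B)))
              sums measure P {w \<in> space P. Z w \<le> z})"
proof -
  interpret P: prob_space P by fact
  have L1: "1 \<le> L" and aM: "0 < aM" and aMQ: "aM < aQ" using assms(2-4) by auto
  have aQ: "0 < aQ" using aM aMQ by simp
  have pos: "0 < muM l" "0 < muQ l" "0 < OmM l" "0 < OmQ l" if "l \<in> {1..L}" for l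
    using assms(5) that by auto
  define U where "U l = Abs_fps (\<lambda>i. u_coef aM aQ (muM l) (muQ l) (OmM l) (OmQ l) i)" for l
  define Kl where "Kl l = aM / (Gamma (muM l) * Gamma (muQ l))" for l
  define c where "c n i = (\<Prod>l\<in>{1..n}. Kl l) * fps_nth (\<Prod>l\<in>{1..n}. U l) i" for n i
  define Bn where "Bn n = aM * (\<Sum>l=1..n. muM l)" for n
  define Zl where "Zl l w = Mv l w / Qv l w" for l w
  define S where "S n w = (\<Sum>l=1..n. Zl l w)" for n w
  have branch: "distributed P lborel (Zl l) (dens aM (\<lambda>i. Kl l * u_coef aM aQ (muM l) (muQ l) (OmM l) (OmQ l) i) (aM * muM l))
     \<and> good aM (\<lambda>i. Kl l * u_coef aM aQ (muM l) (muQ l) (OmM l) (OmQ l) i) (aM * muM l)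
     \<and> (\<forall>z>0. 0 \<le> sd aM (\<lambda>i. Kl l * u_coef aM aQ (muM l) (muQ l) (OmM l) (OmQ l) i) (aM * muM l) z)"
    if l: "l \<in> {1..L}" for l
  proof -
    have "(\<lambda>w. Mv l w / Qv l w) = Zl l" by (simp add: Zl_def fun_eq_iff)
    then show ?thesis
      using P.branch_dist[OF aM aMQ pos[OF l] _ _, of "Mv l" "Qv l"] assms(6-8) l
      by (simp add: Kl_def)
  qed
  have indZ: "P.indep_vars (\<lambda>_. borel) Zl {1..L}"
  proof -
    have "(\<lambda>l w. Mv l w / Qv l w) = Zl" by (simp add: Zl_def fun_eq_iff)
    then show ?thesis using assms(9) by simp
  qed
  have main: "1 \<le> n \<longrightarrow> n \<le> L \<longrightarrow> distributed P lborel (S n) (dens aM (c n) (Bn n))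
      \<and> good aM (c n) (Bn n) \<and> (\<forall>z>0. 0 \<le> sd aM (c n) (Bn n) z)" for n
  proof (induction n)
    case 0
    then show ?case by simp
  next
    case (Suc n)
    show ?case
    proof (intro impI)
      assume n1: "1 \<le> Suc n" and nL: "Suc n \<le> L"
      show "distributed P lborel (S (Suc n)) (dens aM (c (Suc n)) (Bn (Suc n)))
          \<and> good aM (c (Suc n)) (Bn (Suc n)) \<and> (\<forall>z>0. 0 \<le> sd aM (c (Suc n)) (Bn (Suc n)) z)"
      proof (cases "n = 0")
        case True
        have "S (Suc n) = Zl 1" using True by (simp add: S_def fun_eq_iff)
        moreover have "c (Suc n) = (\<lambda>i. Kl 1 * u_coef aM aQ (muM 1) (muQ 1) (OmM 1) (OmQ 1) i)"
          using True by (simp add: c_def U_def fun_eq_iff)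
        moreover have "Bn (Suc n) = aM * muM 1" using True by (simp add: Bn_def)
        ultimately show ?thesis using branch[of 1] L1 by simp
      next
        case False
        then have n1': "1 \<le> n" by simp
        have IH: "distributed P lborel (S n) (dens aM (c n) (Bn n)) \<and> good aM (c n) (Bn n) \<and> (\<forall>z>0. 0 \<le> sd aM (c n) (Bn n) z)"
          using Suc.IH n1' nL by simp
        have lS: "Suc n \<in> {1..L}" using nL by simp
        have Bp: "0 < Bn n"
        proof -
          have "0 < (\<Sum>l=1..n. muM l)" using n1' nL pos by (intro sum_pos) auto
          then show ?thesis using aM by (simp add: Bn_def)
        qed
        have gp: "0 < aM * muM (Suc n)" using aM pos[OF lS] by simp
        have ind: "P.indep_var borel (S n) borel (Zl (Suc n))"
        proof -
          have "P.indep_var borel (\<lambda>w. \<Sum>l=1..n. Zl l w) borel (Zl (Suc n))"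
            by (rule P.indep_partial_sum[OF indZ nL])
          moreover have "(\<lambda>w. \<Sum>l=1..n. Zl l w) = S n" by (simp add: S_def fun_eq_iff)
          ultimately show ?thesis by simp
        qed
        define b where "b = (\<lambda>i. Kl (Suc n) * u_coef aM aQ (muM (Suc n)) (muQ (Suc n)) (OmM (Suc n)) (OmQ (Suc n)) i)"
        have CS: "distributed P lborel (\<lambda>w. S n w + Zl (Suc n) w) (dens aM (cp (c n) b) (Bn n + aM * muM (Suc n)))
           \<and> good aM (cp (c n) b) (Bn n + aM * muM (Suc n)) \<and> (\<forall>x>0. 0 \<le> sd aM (cp (c n) b) (Bn n + aM * muM (Suc n)) x)"
          by (rule P.conv_step[OF aM Bp gp]) (use IH branch[OF lS] ind in \<open>auto simp: b_def\<close>)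
        have e1: "(\<lambda>w. S n w + Zl (Suc n) w) = S (Suc n)" by (simp add: S_def fun_eq_iff)
        have e2: "cp (c n) b = c (Suc n)"
        proof
          fix i
          have "cp (c n) b i = (\<Prod>l\<in>{1..n}. Kl l) * Kl (Suc n) *
              (\<Sum>j=0..i. fps_nth (\<Prod>l\<in>{1..n}. U l) j * fps_nth (U (Suc n)) (i - j))"
            by (simp add: cp_def c_def b_def U_def sum_distrib_left mult_ac)
          also have "\<dots> = c (Suc n) i"
            by (simp add: c_def fps_mult_nth)
          finally show "cp (c n) b i = c (Suc n) i" .
        qed
        have e3: "Bn n + aM * muM (Suc n) = Bn (Suc n)" by (simp add: Bn_def algebra_simps)
        show ?thesis using CS unfolding e1 e2 e3 .
      qed
    qed
  qed
  have HL: "distributed P lborel (S L) (dens aM (c L) (Bn L)) \<and> good aM (c L) (Bn L) \<and> (\<forall>z>0. 0 \<le> sd aM (c L) (Bn L) z)"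
    using main[of L] L1 by simp
  have ZS: "Z = S L" by (simp add: Z_def S_def Zl_def fun_eq_iff)
  have BB: "Bn L = B" by (simp add: B_def Bn_def)
  have Bp: "0 < B"
  proof -
    have "0 < (\<Sum>l=1..L. muM l)" using L1 pos by (intro sum_pos) auto
    then show ?thesis using aM by (simp add: B_def)
  qed
  have dfps: "delta i = fps_nth (\<Prod>l\<in>{1..L}. U l) i" for i
    using delta_eq_fps[of L "\<lambda>l i. u_coef aM aQ (muM l) (muQ l) (OmM l) (OmQ l) i" i]
      u_coef0_pos[OF aM aQ pos] by (simp add: delta_def U_def less_imp_neq[symmetric])
  have CK: "(\<Prod>l\<in>{1..L}. Kl l) = C"
  proof -
    have "(\<Prod>l\<in>{1..L}. Kl l) = (\<Prod>l\<in>{1..L}. aM * (1 / (Gamma (muM l) * Gamma (muQ l))))"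
      by (simp add: Kl_def)
    also have "\<dots> = aM ^ L * (\<Prod>l\<in>{1..L}. 1 / (Gamma (muM l) * Gamma (muQ l)))"
      by (simp only: prod.distrib prod_constant card_atLeastAtMost) simp
    finally show ?thesis by (simp add: C_def)
  qed
  have cL: "c L i = C * delta i" for i unfolding c_def CK dfps by simp
  have Cp: "0 < C"
  proof -
    have "0 < (\<Prod>l\<in>{1..L}. 1 / (Gamma (muM l) * Gamma (muQ l)))"
      using pos by (intro prod_pos) auto
    then show ?thesis using aM by (simp add: C_def)
  qed
  have ex: "-1 + real i * aM + B = real i * aM + B - 1" for i by simp
  define g where "g z i = delta i * z powr (-1 + real i * aM + B) / Gamma (real i * aM + B)" for z :: real and i
  have gpos: "0 < Gamma (real i * aM + B)" for i using aM Bp by (intro Gamma_real_pos add_nonneg_pos) auto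
  have sg: "summable (g z)" if z: "0 < z" for z
  proof -
    have "summable (\<lambda>i. \<bar>c L i\<bar> * z powr (real i * aM + Bn L - 1) / Gamma (real i * aM + Bn L))"
      using HL z by (simp add: good_def)
    then have "summable (\<lambda>i. (1 / C) * (\<bar>c L i\<bar> * z powr (real i * aM + Bn L - 1) / Gamma (real i * aM + Bn L)))"
      by (rule summable_mult)
    moreover have "(1 / C) * (\<bar>c L i\<bar> * z powr (real i * aM + Bn L - 1) / Gamma (real i * aM + Bn L)) = \<bar>g z i\<bar>" for i
      using Cp gpos[of i] unfolding cL BB g_def ex by (simp add: abs_mult)
    ultimately have "summable (\<lambda>i. \<bar>g z i\<bar>)" by simp
    then show ?thesis by (rule summable_rabs_cancel)
  qed
  have sdL: "sd aM (c L) (Bn L) z = C * (\<Sum>i. g z i)" if z: "0 < z" for z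
  proof -
    have "sd aM (c L) (Bn L) z = (\<Sum>i. C * g z i)"
      unfolding sd_def BB cL g_def ex by (simp add: mult.assoc)
    also have "\<dots> = C * (\<Sum>i. g z i)" by (rule suminf_mult[OF sg[OF z]])
    finally show ?thesis .
  qed
  have part1: "\<forall>z>0. summable (\<lambda>i. delta i * z powr (-1 + real i * aM + B) / Gamma (real i * aM + B))"
  proof (intro allI impI)
    fix z :: real assume "0 < z"
    then have "summable (g z)" by (rule sg)
    then show "summable (\<lambda>i. delta i * z powr (-1 + real i * aM + B) / Gamma (real i * aM + B))"
      unfolding g_def[abs_def] by simp
  qed
  have densL: "dens aM (c L) (Bn L) = (\<lambda>z. ennreal (if 0 < z then
            C * (\<Sum>i. delta i * z powr (-1 + real i * aM + B) / Gamma (real i * aM + B)) else 0))"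
  proof
    fix z :: real
    show "dens aM (c L) (Bn L) z = ennreal (if 0 < z then
            C * (\<Sum>i. delta i * z powr (-1 + real i * aM + B) / Gamma (real i * aM + B)) else 0)"
      using sdL[of z] by (simp add: dens_def g_def)
  qed
  have part2: "distributed P lborel Z (\<lambda>z. ennreal (if 0 < z then
            C * (\<Sum>i. delta i * z powr (-1 + real i * aM + B) / Gamma (real i * aM + B)) else 0))"
    using HL unfolding ZS densL by simp
  have part3: "\<forall>z\<ge>0. (\<lambda>i. C * (delta i * z powr (real i * aM + B) / Gamma (1 + real i * aM + B)))
              sums measure P {w \<in> space P. Z w \<le> z}"
  proof (intro allI impI)
    fix z :: real assume z: "0 \<le> z"
    have "(\<lambda>i. c L i * z powr (real i * aM + Bn L) / Gamma (1 + real i * aM + Bn L)) sums measure P {w \<in> space P. S L w \<le> z}"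
      by (rule P.cdf_series[OF aM]) (use Bp BB HL z in auto)
    then show "(\<lambda>i. C * (delta i * z powr (real i * aM + B) / Gamma (1 + real i * aM + B)))
              sums measure P {w \<in> space P. Z w \<le> z}"
      unfolding cL BB ZS by (simp add: mult.assoc)
  qed
  show ?thesis using part1 part2 part3 by blast
qed

end
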